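(* Consider the interconnected system described in the context, with a partition $\{1,\dots,n\}=I_\Sigma\cup I_{\max}$, and assume each subsystem is globally stable (GS) in the mixed sense with gains $\hat\gamma_{ij}$, i.e. there are $\sigma_i,\hat\gamma_{ij},\hat\gamma_i\in\mathcal{K}\cup\{0\}$ such that for every initial value and all inputs the solution $x_i$ of the $i$-th subsystem exists, is unique, and for all $t\ge0$ $|x_i(t)|\le\sigma_i(|x_i(0)|)+\sum_{j=1}^n\hat\gamma_{ij}(\|x_{j[0,t]}\|_\infty)+\hat\gamma_i(\|u\|_\infty)$ if $i\in I_\Sigma$, and $|x_i(t)|\le\max\{\sigma_i(|x_i(0)|),\max_j\hat\gamma_{ij}(\|x_{j[0,t]}\|_\infty),\hat\gamma_i(\|u\|_\infty)\}$ if $i\in I_{\max}$. Let $\Gamma$ be the gain operator built from $(\hat\gamma_{ij})$ (with $\hat\gamma_{ii}\equiv0$). If there exists $\alpha\in\mathcal{K}_\infty$ such that $\Gamma\circ D_\alpha(s)\not\ge s$ for all $s\in\mathbb{R}^n_+\setminus\{0\}$, then the whole system $\dot x=f(x,u)$ is GS, i.e. there exist $\sigma,\hat\gamma\in\mathcal{K}$ with $|x(t)|\le\sigma(|x(0)|)+\hat\gamma(\|u\|_\infty)$ for all $x(0)$, all $u\in L_\infty$, all $t\ge0$.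
   Context: The interconnection is $\dot x_i=f_i(x_1,\dots,x_n,u_i)$, $i=1,\dots,n$, with $x_i\in\mathbb{R}^{N_i}$, $u_i\in\mathbb{R}^{m_i}$, where each $f_i$ is continuous and, for every $r$, locally Lipschitz in $x=(x_1^T,\dots,x_n^T)^T$ uniformly in $u_i$ with $|u_i|\le r$; it is written as $\dot x=f(x,u)$ with $u=(u_1^T,\dots,u_n^T)^T$. For the $i$-th subsystem the states $x_j$, $j\neq i$, are treated as independent inputs. For a function $v$ on $\mathbb{R}_+$, $v_{[s_1,s_2]}$ equals $v$ on $[s_1,s_2]$ and $0$ elsewhere; $\|\cdot\|_\infty$ is the essential supremum norm; $|\cdot|$ a norm. $\mathcal{K}$: continuous strictly increasing functions $\mathbb{R}_+\to\mathbb{R}_+$ vanishing at $0$; $\mathcal{K}_\infty$: unbounded ones. For $x,y\in\mathbb{R}^n$, $x\not\ge y$ means $x_i<y_i$ for some $i$. The gain operator is $\Gamma(s)=(\Gamma_1(s),\dots,\Gamma_n(s))^T$ with $\Gamma_i(s)=\sum_j\hat\gamma_{ij}(s_j)$ for $i\in I_\Sigma$ and $\Gamma_i(s)=\max_j\hat\gamma_{ij}(s_j)$ for $i\in I_{\max}$; $D_\alpha(s)=(D_1(s_1),\dots,D_n(s_n))^T$ with $D_i=\mathrm{id}+\alpha$ for $i\in I_\Sigma$ and $D_i=\mathrm{id}$ for $i\in I_{\max}$. *)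

theory Defs
  imports "HOL-Analysis.Analysis"
begin

definition class_K :: "(real \<Rightarrow> real) \<Rightarrow> bool" where
  "class_K g \<longleftrightarrow> continuous_on {0..} g \<and> strict_mono_on {0..} g \<and> g 0 = 0"

definition class_Kinf :: "(real \<Rightarrow> real) \<Rightarrow> bool" where
  "class_Kinf g \<longleftrightarrow> class_K g \<and> filterlim g at_top at_top"

definition class_K0 :: "(real \<Rightarrow> real) \<Rightarrow> bool" where
  "class_K0 g \<longleftrightarrow> class_K g \<or> (\<forall>s\<ge>0. g s = 0)"

definition blk :: "('k \<Rightarrow> 'i) \<Rightarrow> 'i \<Rightarrow> real^'k \<Rightarrow> real^'k" where
  "blk b i v = (\<chi> k. if b k = i then v $ k else 0)"

definition Linf :: "(real \<Rightarrow> 'a::euclidean_space) \<Rightarrow> bool" where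
  "Linf u \<longleftrightarrow> (\<lambda>t. indicator {0..} t *\<^sub>R u t) \<in> borel_measurable lborel
      \<and> (\<exists>B. AE t in lborel. 0 \<le> t \<longrightarrow> norm (u t) \<le> B)"

definition linf_norm :: "(real \<Rightarrow> 'a::real_normed_vector) \<Rightarrow> real" where
  "linf_norm u = Inf {B. 0 \<le> B \<and> (AE t in lborel. 0 \<le> t \<longrightarrow> norm (u t) \<le> B)}"

definition trunc :: "real \<Rightarrow> real \<Rightarrow> (real \<Rightarrow> 'a::zero) \<Rightarrow> real \<Rightarrow> 'a" where
  "trunc a b v = (\<lambda>s. if a \<le> s \<and> s \<le> b then v s else 0)"

text \<open>(Caratheodory) solution on [0,\<infinity>) of x' = F t x, x(0) = xi, in integral form.\<close>
definition is_solution :: "(real \<Rightarrow> 'a::euclidean_space \<Rightarrow> 'a) \<Rightarrow> 'a \<Rightarrow> (real \<Rightarrow> 'a) \<Rightarrow> bool" where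
  "is_solution F xi x \<longleftrightarrow> x 0 = xi \<and> continuous_on {0..} x
     \<and> (\<forall>t\<ge>0. ((\<lambda>s. F s (x s)) has_integral (x t - xi)) {0..t})"

text \<open>Right-hand side of the i-th subsystem: state y (block i), the other blocks x_j
  taken from the independent input w, input u.\<close>
definition sub_rhs :: "('d \<Rightarrow> 'i) \<Rightarrow> (real^'d \<Rightarrow> real^'m \<Rightarrow> real^'d) \<Rightarrow> 'i
     \<Rightarrow> (real \<Rightarrow> real^'d) \<Rightarrow> (real \<Rightarrow> real^'m) \<Rightarrow> real \<Rightarrow> real^'d \<Rightarrow> real^'d" where
  "sub_rhs b f i w u = (\<lambda>s y. blk b i (f (y + (w s - blk b i (w s))) (u s)))"

definition gain_op :: "'i set \<Rightarrow> ('i \<Rightarrow> 'i \<Rightarrow> real \<Rightarrow> real) \<Rightarrow> real^'i \<Rightarrow> real^'i" where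
  "gain_op IS g s = (\<chi> i. if i \<in> IS then (\<Sum>j\<in>UNIV. g i j (s $ j))
                                      else Max (range (\<lambda>j. g i j (s $ j))))"

definition D_op :: "'i set \<Rightarrow> (real \<Rightarrow> real) \<Rightarrow> real^'i \<Rightarrow> real^'i" where
  "D_op IS \<alpha> s = (\<chi> i. if i \<in> IS then s $ i + \<alpha> (s $ i) else s $ i)"

end

theory Submission
  imports Defs
begin

lemma K0_props:
  assumes "class_K0 g"
  shows "g 0 = 0" "continuous_on {0..} g" "\<And>s. 0 \<le> s \<Longrightarrow> 0 \<le> g s"
    "\<And>a b. 0 \<le> a \<Longrightarrow> a \<le> b \<Longrightarrow> g a \<le> g b"
proof -
  have m: "g a \<le> g b" if "0 \<le> a" "a \<le> b" for a b
  proof (cases "class_K g")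
    case True
    then have "strict_mono_on {0..} g" by (simp add: class_K_def)
    then show ?thesis using that unfolding strict_mono_on_def
      by (cases "a = b") (auto simp: less_eq_real_def)
  next
    case False
    then show ?thesis using assms that by (simp add: class_K0_def)
  qed
  show "g 0 = 0" using assms unfolding class_K0_def class_K_def by auto
  then show "\<And>s. 0 \<le> s \<Longrightarrow> 0 \<le> g s" using m[of 0] by simp
  show "\<And>a b. 0 \<le> a \<Longrightarrow> a \<le> b \<Longrightarrow> g a \<le> g b" by (rule m)
  show "continuous_on {0..} g"
  proof (cases "class_K g")
    case True then show ?thesis by (simp add: class_K_def)
  next
    case False
    then have "\<forall>s\<ge>0. g s = 0" using assms by (simp add: class_K0_def)
    then show ?thesis using continuous_on_cong[of "{0..}" "{0..}" g "\<lambda>_. 0"] by auto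
  qed
qed

lemma blk_linear: "bounded_linear (blk b i)"
proof -
  have "linear (blk b i)"
    by (rule linearI) (auto simp: blk_def vec_eq_iff)
  then show ?thesis by (simp add: linear_conv_bounded_linear)
qed

lemma blk_idem[simp]: "blk b i (blk b i v) = blk b i v"
  by (auto simp: blk_def vec_eq_iff)

lemma norm_blk_le: "norm (blk b i v) \<le> norm v"
proof -
  have "\<And>k. \<bar>blk b i v $ k\<bar> \<le> \<bar>v $ k\<bar>" by (auto simp: blk_def)
  then show ?thesis unfolding norm_vec_def
    by (intro L2_set_mono) auto
qed

lemma sum_blk: "(\<Sum>i\<in>(UNIV::'i::finite set). blk b i v) = (v::real^'k)"
proof -
  have "(\<Sum>i\<in>UNIV. blk b i v) $ k = v $ k" for k
  proof -
    have "(\<Sum>i\<in>UNIV. blk b i v) $ k = (\<Sum>i\<in>UNIV. (if b k = i then v $ k else 0))"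
      by (simp add: blk_def sum_component)
    also have "\<dots> = v $ k" by (simp add: sum.delta')
    finally show ?thesis .
  qed
  then show ?thesis by (simp add: vec_eq_iff)
qed

lemma norm_le_sum_blk: "norm (v::real^'k) \<le> (\<Sum>i\<in>(UNIV::'i::finite set). norm (blk b i v))"
  using norm_sum[of "\<lambda>i. blk b i v" UNIV] by (simp add: sum_blk)

lemma Kinf_mono:
  assumes "class_Kinf h" "0 \<le> a" "a < b" shows "h a < h b"
  using assms unfolding class_Kinf_def class_K_def strict_mono_on_def by auto

lemma Kinf_mono_le:
  assumes "class_Kinf h" "0 \<le> a" "a \<le> b" shows "h a \<le> h b"
  using Kinf_mono[OF assms(1,2), of b] assms by (cases "a = b") auto

lemma Kinf_0: "class_Kinf h \<Longrightarrow> h 0 = 0"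
  by (simp add: class_Kinf_def class_K_def)

lemma Kinf_nonneg: "class_Kinf h \<Longrightarrow> 0 \<le> a \<Longrightarrow> 0 \<le> h a"
  using Kinf_mono_le[of h 0 a] Kinf_0[of h] by simp

definition kinv :: "(real \<Rightarrow> real) \<Rightarrow> real \<Rightarrow> real" where
  "kinv h y = (SOME x. 0 \<le> x \<and> h x = y)"

lemma kinv:
  assumes h: "class_Kinf h" and y: "0 \<le> y"
  shows "0 \<le> kinv h y" "h (kinv h y) = y"
proof -
  have "eventually (\<lambda>x. y \<le> h x) at_top"
    using h unfolding class_Kinf_def filterlim_at_top by auto
  then obtain b where b: "\<And>x. x \<ge> b \<Longrightarrow> y \<le> h x" by (auto simp: eventually_at_top_linorder)
  let ?b = "max b 0"
  have "continuous_on {0..?b} h" using h unfolding class_Kinf_def class_K_def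
    by (auto intro: continuous_on_subset)
  moreover have "h 0 \<le> y" using h y by (simp add: Kinf_0)
  moreover have "y \<le> h ?b" using b by simp
  ultimately obtain x where "0 \<le> x" "x \<le> ?b" "h x = y"
    using IVT'[of h 0 y ?b] by auto
  then have "\<exists>x. 0 \<le> x \<and> h x = y" by auto
  then have "0 \<le> kinv h y \<and> h (kinv h y) = y" unfolding kinv_def by (rule someI_ex)
  then show "0 \<le> kinv h y" "h (kinv h y) = y" by auto
qed

lemma kinv_eq:
  assumes h: "class_Kinf h" and "0 \<le> x" shows "kinv h (h x) = x"
proof -
  have hx: "0 \<le> h x" using Kinf_nonneg[OF h assms(2)] .
  note k = kinv[OF h hx]
  show ?thesis
  proof (rule ccontr)
    assume "kinv h (h x) \<noteq> x"
    then have "kinv h (h x) < x \<or> x < kinv h (h x)" by auto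
    then show False using Kinf_mono[OF h] k assms by (metis less_irrefl)
  qed
qed

lemma kinv_le_iff:
  assumes h: "class_Kinf h" and "0 \<le> x" "0 \<le> y"
  shows "kinv h y \<le> x \<longleftrightarrow> y \<le> h x"
proof -
  note k = kinv[OF h assms(3)]
  show ?thesis
  proof
    assume "kinv h y \<le> x" then show "y \<le> h x" using Kinf_mono_le[OF h k(1)] k(2) by metis
  next
    assume a: "y \<le> h x"
    show "kinv h y \<le> x"
    proof (rule ccontr)
      assume "\<not> kinv h y \<le> x"
      then have "h x < h (kinv h y)" using Kinf_mono[OF h assms(2)] by simp
      then show False using a k by simp
    qed
  qed
qed

lemma kinv_mono:
  assumes h: "class_Kinf h" and "0 \<le> a" "a \<le> b" shows "kinv h a \<le> kinv h b"
  using kinv_le_iff[OF h kinv(1)[OF h, of b] assms(2)] kinv[OF h, of b] assms by simp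

lemma kinv_0: "class_Kinf h \<Longrightarrow> kinv h 0 = 0"
  using kinv_eq[of h 0] Kinf_0[of h] by simp

lemma kinv_cont:
  assumes h: "class_Kinf h" shows "continuous_on {0..} (kinv h)"
  unfolding continuous_on_iff
proof (intro ballI allI impI)
  fix y0 e :: real assume y0: "y0 \<in> {0..}" and e: "0 < e"
  define x0 where "x0 = kinv h y0"
  have x0: "0 \<le> x0" "h x0 = y0" using kinv[OF h] y0 by (auto simp: x0_def)
  define hi where "hi = h (x0 + e)"
  define lo where "lo = (if 0 \<le> x0 - e then h (x0 - e) else -1)"
  have hi: "y0 < hi" using Kinf_mono[OF h x0(1), of "x0+e"] e x0 by (simp add: hi_def)
  have lo: "lo < y0" using Kinf_mono[OF h, of "x0 - e" x0] e x0 y0 by (auto simp: lo_def)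
  define d where "d = min (hi - y0) (y0 - lo)"
  have "0 < d" using hi lo by (simp add: d_def)
  moreover have "dist (kinv h y) (kinv h y0) < e" if y: "y \<in> {0..}" "dist y y0 < d" for y
  proof -
    have yb: "lo < y" "y < hi" using y by (auto simp: d_def dist_real_def)
    have ky: "0 \<le> kinv h y" "h (kinv h y) = y" using kinv[OF h] y by auto
    have 1: "kinv h y < x0 + e"
    proof (rule ccontr)
      assume "\<not> ?thesis"
      then have "hi \<le> h (kinv h y)" unfolding hi_def using Kinf_mono_le[OF h, of "x0+e"] x0 e by auto
      then show False using ky yb by simp
    qed
    have 2: "x0 - e < kinv h y"
    proof (cases "0 \<le> x0 - e")
      case True
      show ?thesis
      proof (rule ccontr)
        assume "\<not> ?thesis"
        then have "h (kinv h y) \<le> lo" unfolding lo_def using True Kinf_mono_le[OF h ky(1), of "x0 - e"] by auto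
        then show False using ky yb by simp
      qed
    next
      case False then show ?thesis using ky by simp
    qed
    show ?thesis using 1 2 by (simp add: dist_real_def x0_def[symmetric])
  qed
  ultimately show "\<exists>d>0. \<forall>y\<in>{0..}. dist y y0 < d \<longrightarrow> dist (kinv h y) (kinv h y0) < e" by blast
qed

lemma Kinf_plus_id:
  assumes "class_Kinf \<alpha>" shows "class_Kinf (\<lambda>x. x + \<alpha> x)"
proof -
  have c: "continuous_on {0..} \<alpha>" "strict_mono_on {0..} \<alpha>" "\<alpha> 0 = 0"
    using assms by (auto simp: class_Kinf_def class_K_def)
  have "continuous_on {0..} (\<lambda>x. x + \<alpha> x)" by (intro continuous_intros c)
  moreover have "strict_mono_on {0..} (\<lambda>x. x + \<alpha> x)"
    using c(2) by (auto simp: strict_mono_on_def intro: add_strict_mono)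
  moreover have "filterlim (\<lambda>x. x + \<alpha> x) at_top at_top"
  proof (rule filterlim_at_top_mono[OF filterlim_ident])
    show "\<forall>\<^sub>F x in at_top. x \<le> x + \<alpha> x"
      using Kinf_nonneg[OF assms] by (auto simp: eventually_at_top_linorder intro!: exI[of _ 0])
  qed
  ultimately show ?thesis using c(3) by (simp add: class_Kinf_def class_K_def)
qed

definition Gam :: "'i::finite set \<Rightarrow> ('i \<Rightarrow> 'i \<Rightarrow> real \<Rightarrow> real) \<Rightarrow> ('i \<Rightarrow> real) \<Rightarrow> 'i \<Rightarrow> real" where
  "Gam IS g s i = (if i \<in> IS then (\<Sum>j\<in>UNIV. g i j (s j)) else Max (range (\<lambda>j. g i j (s j))))"

definition SGI :: "'i::finite set \<Rightarrow> ('i \<Rightarrow> 'i \<Rightarrow> real \<Rightarrow> real) \<Rightarrow> ('i \<Rightarrow> real) \<Rightarrow> ('i \<Rightarrow> real) \<Rightarrow> bool" where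
  "SGI IS g s w \<longleftrightarrow> (\<forall>i. s i \<le> (if i \<in> IS then w i + Gam IS g s i else max (w i) (Gam IS g s i)))"

lemma Max_range_ge: "(f::'i::finite \<Rightarrow> real) j \<le> Max (range f)"
  by (rule Max_ge) auto

lemma Gam_nonneg:
  assumes g: "\<And>i j. class_K0 (g i j)" and s: "\<And>j. 0 \<le> s j"
  shows "0 \<le> Gam IS g s i"
proof -
  have "0 \<le> g i j (s j)" for j using K0_props(3)[OF g s] .
  moreover then have "0 \<le> Max (range (\<lambda>j. g i j (s j)))"
    using Max_range_ge[of "\<lambda>j. g i j (s j)"] order_trans by blast
  ultimately show ?thesis unfolding Gam_def by (auto intro: sum_nonneg)
qed

lemma sg_step:
  fixes s w :: "'i::finite \<Rightarrow> real"
  assumes \<alpha>: "class_Kinf \<alpha>"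
    and SG: "\<forall>s::real^'i. (\<forall>i. 0 \<le> s $ i) \<and> s \<noteq> 0 \<longrightarrow> (\<exists>i. gain_op IS g (D_op IS \<alpha> s) $ i < s $ i)"
    and g: "\<And>i j. class_K0 (g i j)"
    and s: "\<And>i. 0 \<le> s i" and snz: "s \<noteq> (\<lambda>_. 0)"
    and w: "\<And>i. 0 \<le> w i" and sgi: "SGI IS g s w"
  shows "\<exists>i. 0 < s i \<and> s i \<le> w i + kinv \<alpha> (w i)"
proof -
  define \<rho> where "\<rho> = (\<lambda>x::real. x + \<alpha> x)"
  have \<rho>K: "class_Kinf \<rho>" unfolding \<rho>_def by (rule Kinf_plus_id[OF \<alpha>])
  define r where "r = (\<lambda>i. if i \<in> IS then kinv \<rho> (s i) else s i)"
  have r0: "0 \<le> r i" for i using kinv(1)[OF \<rho>K s] s by (simp add: r_def)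
  have Dr: "D_op IS \<alpha> (vec_lambda r) = vec_lambda s"
    using kinv(2)[OF \<rho>K s] by (simp add: D_op_def r_def \<rho>_def vec_eq_iff)
  have gD: "gain_op IS g (D_op IS \<alpha> (vec_lambda r)) $ i = Gam IS g s i" for i
    by (simp add: Dr gain_op_def Gam_def)
  have rnz: "vec_lambda r \<noteq> 0"
  proof
    assume "vec_lambda r = 0"
    then have "r i = 0" for i by (simp add: vec_eq_iff)
    have "s i = 0" for i
    proof (cases "i \<in> IS")
      case True
      then have "kinv \<rho> (s i) = 0" using \<open>r i = 0\<close> by (simp add: r_def)
      then have "\<rho> (kinv \<rho> (s i)) = 0" using Kinf_0[OF \<alpha>] by (simp add: \<rho>_def)
      then show ?thesis using kinv(2)[OF \<rho>K s, of i] by simp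
    next
      case False then show ?thesis using \<open>r i = 0\<close> by (simp add: r_def)
    qed
    then show False using snz by auto
  qed
  obtain i where i: "Gam IS g s i < r i"
    using SG[rule_format, of "vec_lambda r"] r0 rnz gD by auto
  have G0: "0 \<le> Gam IS g s i" by (rule Gam_nonneg[OF g s])
  show ?thesis
  proof (cases "i \<in> IS")
    case True
    have ri: "r i = kinv \<rho> (s i)" using True by (simp add: r_def)
    have si: "s i = r i + \<alpha> (r i)" using kinv(2)[OF \<rho>K s, of i] ri by (simp add: \<rho>_def)
    have "s i \<le> w i + Gam IS g s i" using sgi[unfolded SGI_def, rule_format, of i] True by simp
    then have a: "\<alpha> (r i) < w i" using i si by simp
    have "r i < kinv \<alpha> (w i)"
    proof (rule ccontr)
      assume "\<not> ?thesis"
      then have "kinv \<alpha> (w i) \<le> r i" by simp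
      then have "w i \<le> \<alpha> (r i)" using kinv_le_iff[OF \<alpha> r0 w] by simp
      then show False using a by simp
    qed
    moreover have "0 < s i" using si i G0 Kinf_nonneg[OF \<alpha> r0[of i]] by simp
    ultimately show ?thesis using si a by (intro exI[of _ i]) auto
  next
    case False
    have ri: "r i = s i" using False by (simp add: r_def)
    have "s i \<le> max (w i) (Gam IS g s i)" using sgi[unfolded SGI_def, rule_format, of i] False by simp
    then have "s i \<le> w i" using i ri by (auto simp: max_def split: if_splits)
    moreover have "0 < s i" using i ri G0 by simp
    ultimately show ?thesis using kinv(1)[OF \<alpha> w[of i]] by auto
  qed
qed

definition Gs :: "('i::finite \<Rightarrow> 'i \<Rightarrow> real \<Rightarrow> real) \<Rightarrow> real \<Rightarrow> real" where
  "Gs g v = (\<Sum>i\<in>UNIV. \<Sum>j\<in>UNIV. g i j v)"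

definition psi :: "(real \<Rightarrow> real) \<Rightarrow> real \<Rightarrow> real" where
  "psi \<alpha> v = v + kinv \<alpha> v"

primrec Bm :: "(real \<Rightarrow> real) \<Rightarrow> ('i::finite \<Rightarrow> 'i \<Rightarrow> real \<Rightarrow> real) \<Rightarrow> nat \<Rightarrow> real \<Rightarrow> real" where
  "Bm \<alpha> g 0 W = 0"
| "Bm \<alpha> g (Suc m) W = Bm \<alpha> g m W + psi \<alpha> (W + Gs g (Bm \<alpha> g m W))"

lemma Gs_props:
  assumes g: "\<And>i j. class_K0 (g i j)"
  shows "\<And>v. 0 \<le> v \<Longrightarrow> 0 \<le> Gs g v" "\<And>a b. 0 \<le> a \<Longrightarrow> a \<le> b \<Longrightarrow> Gs g a \<le> Gs g b"
    "Gs g 0 = 0" "continuous_on {0..} (Gs g)"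
  using K0_props[OF g] unfolding Gs_def
  by (auto intro!: sum_nonneg sum_mono continuous_on_sum)

lemma psi_props:
  assumes \<alpha>: "class_Kinf \<alpha>"
  shows "\<And>v. 0 \<le> v \<Longrightarrow> 0 \<le> psi \<alpha> v" "\<And>a b. 0 \<le> a \<Longrightarrow> a \<le> b \<Longrightarrow> psi \<alpha> a \<le> psi \<alpha> b"
    "psi \<alpha> 0 = 0" "continuous_on {0..} (psi \<alpha>)"
proof -
  show "\<And>v. 0 \<le> v \<Longrightarrow> 0 \<le> psi \<alpha> v" using kinv(1)[OF \<alpha>] by (simp add: psi_def)
  show "\<And>a b. 0 \<le> a \<Longrightarrow> a \<le> b \<Longrightarrow> psi \<alpha> a \<le> psi \<alpha> b"
    using kinv_mono[OF \<alpha>] by (simp add: psi_def add_mono)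
  show "psi \<alpha> 0 = 0" using kinv_0[OF \<alpha>] by (simp add: psi_def)
  show "continuous_on {0..} (psi \<alpha>)" unfolding psi_def
    by (intro continuous_intros kinv_cont[OF \<alpha>])
qed

lemma Bm_props:
  assumes \<alpha>: "class_Kinf \<alpha>" and g: "\<And>i j. class_K0 (g i j)"
  shows "(\<forall>W\<ge>0. 0 \<le> Bm \<alpha> g m W) \<and> (\<forall>a b. 0 \<le> a \<longrightarrow> a \<le> b \<longrightarrow> Bm \<alpha> g m a \<le> Bm \<alpha> g m b)
    \<and> Bm \<alpha> g m 0 = 0 \<and> continuous_on {0..} (Bm \<alpha> g m)"
proof (induction m)
  case 0 then show ?case by simp
next
  case (Suc m)
  note IH = Suc.IH
  note G = Gs_props[of g, OF g] and P = psi_props[OF \<alpha>]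
  have 1: "\<forall>W\<ge>0. 0 \<le> Bm \<alpha> g (Suc m) W"
  proof (intro allI impI)
    fix W :: real assume W: "0 \<le> W"
    have a: "0 \<le> Bm \<alpha> g m W" using IH W by blast
    then have "0 \<le> W + Gs g (Bm \<alpha> g m W)" using G(1)[OF a] W by simp
    then have "0 \<le> psi \<alpha> (W + Gs g (Bm \<alpha> g m W))" by (rule P(1))
    then show "0 \<le> Bm \<alpha> g (Suc m) W" using a by simp
  qed
  have 2: "\<forall>a b. 0 \<le> a \<longrightarrow> a \<le> b \<longrightarrow> Bm \<alpha> g (Suc m) a \<le> Bm \<alpha> g (Suc m) b"
  proof (intro allI impI)
    fix a b :: real assume ab: "0 \<le> a" "a \<le> b"
    have "Bm \<alpha> g m a \<le> Bm \<alpha> g m b" using IH ab by blast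
    moreover have "Gs g (Bm \<alpha> g m a) \<le> Gs g (Bm \<alpha> g m b)" using G(2) IH ab by blast
    moreover have "0 \<le> a + Gs g (Bm \<alpha> g m a)" using G(1) IH ab by auto
    ultimately have "psi \<alpha> (a + Gs g (Bm \<alpha> g m a)) \<le> psi \<alpha> (b + Gs g (Bm \<alpha> g m b))"
      using P(2) ab by simp
    then show "Bm \<alpha> g (Suc m) a \<le> Bm \<alpha> g (Suc m) b" using \<open>Bm \<alpha> g m a \<le> Bm \<alpha> g m b\<close> by simp
  qed
  have 3: "Bm \<alpha> g (Suc m) 0 = 0" using IH G(3) P(3) by simp
  have cB: "continuous_on {0..} (Bm \<alpha> g m)" using IH by blast
  have c0: "continuous_on {0..} (\<lambda>W. Gs g (Bm \<alpha> g m W))"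
    by (rule continuous_on_compose2[OF G(4) cB]) (use IH in auto)
  have c1: "continuous_on {0..} (\<lambda>W. W + Gs g (Bm \<alpha> g m W))"
    by (intro continuous_intros c0)
  have c2: "continuous_on {0..} (\<lambda>W. psi \<alpha> (W + Gs g (Bm \<alpha> g m W)))"
    using c1 IH G(1) by (intro continuous_on_compose2[OF P(4) c1]) auto
  have 4: "continuous_on {0..} (Bm \<alpha> g (Suc m))"
    using IH c2 by (simp add: continuous_on_add)
  show ?case using 1 2 3 4 by blast
qed

lemma sg_induct:
  fixes s w :: "'i::finite \<Rightarrow> real"
  assumes \<alpha>: "class_Kinf \<alpha>"
    and SG: "\<forall>s::real^'i. (\<forall>i. 0 \<le> s $ i) \<and> s \<noteq> 0 \<longrightarrow> (\<exists>i. gain_op IS g (D_op IS \<alpha> s) $ i < s $ i)"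
    and g: "\<And>i j. class_K0 (g i j)"
    and s: "\<And>i. 0 \<le> s i" and w: "\<And>i. 0 \<le> w i" "\<And>i. w i \<le> W" and sgi: "SGI IS g s w"
  shows "\<exists>A. (m \<le> card A \<or> A = UNIV) \<and> (\<forall>i\<in>A. s i \<le> Bm \<alpha> g m W)"
proof (induction m)
  case 0 then show ?case by (auto intro!: exI[of _ "{}"])
next
  case (Suc m)
  then obtain A where A: "m \<le> card A \<or> A = UNIV" "\<forall>i\<in>A. s i \<le> Bm \<alpha> g m W" by blast
  have W0: "0 \<le> W" using w[of undefined] by linarith
  note BP = Bm_props[of \<alpha> g m, OF \<alpha> g]
  let ?B = "Bm \<alpha> g m W"
  have B0: "0 \<le> ?B" using conjunct1[OF BP] W0 by simp
  have Gs0: "0 \<le> Gs g ?B" using Gs_props(1)[of g, OF g B0] .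
  have BS: "?B \<le> Bm \<alpha> g (Suc m) W" "psi \<alpha> (W + Gs g ?B) \<le> Bm \<alpha> g (Suc m) W"
  proof -
    have ps0: "0 \<le> psi \<alpha> (W + Gs g ?B)" by (rule psi_props(1)[OF \<alpha>]) (use W0 Gs0 in simp)
    then show "?B \<le> Bm \<alpha> g (Suc m) W" by simp
    show "psi \<alpha> (W + Gs g ?B) \<le> Bm \<alpha> g (Suc m) W" using B0 by simp
  qed
  show ?case
  proof (cases "A = UNIV")
    case True
    have "\<forall>i. s i \<le> Bm \<alpha> g (Suc m) W"
    proof
      fix i have "s i \<le> ?B" using A(2) True by blast
      then show "s i \<le> Bm \<alpha> g (Suc m) W" using BS(1) by linarith
    qed
    then show ?thesis by (intro exI[of _ UNIV]) simp
  next
    case False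
    with A have cA: "m \<le> card A" by auto
    define s' where "s' = (\<lambda>i. if i \<in> A then 0 else s i)"
    define w' where "w' = (\<lambda>j. w j + (\<Sum>k\<in>UNIV. g j k ?B))"
    have s'0: "0 \<le> s' i" for i using s by (simp add: s'_def)
    have gB0: "0 \<le> g j k ?B" for j k using K0_props(3)[OF g[of j k] B0] .
    have w'0: "0 \<le> w' j" for j using w gB0 by (simp add: w'_def sum_nonneg add_nonneg_nonneg)
    have w'W: "w' j \<le> W + Gs g ?B" for j
    proof -
      have "(\<Sum>k\<in>UNIV. g j k ?B) \<le> Gs g ?B" unfolding Gs_def
        by (rule member_le_sum[of j UNIV "\<lambda>i. \<Sum>k\<in>UNIV. g i k ?B"]) (auto intro: sum_nonneg gB0)
      then show ?thesis using w(2)[of j] by (simp add: w'_def)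
    qed
    have gsplit: "g j k (s k) \<le> g j k (s' k) + g j k ?B" for j k
    proof (cases "k \<in> A")
      case True
      then have "g j k (s k) \<le> g j k ?B" using K0_props(4)[OF g[of j k] s[of k]] A(2) by blast
      moreover have "g j k (s' k) = 0" using True K0_props(1)[OF g[of j k]] by (simp add: s'_def)
      ultimately show ?thesis by simp
    next
      case False then show ?thesis using gB0 by (simp add: s'_def)
    qed
    have sgi': "SGI IS g s' w'"
      unfolding SGI_def
    proof
      fix j
      show "s' j \<le> (if j \<in> IS then w' j + Gam IS g s' j else max (w' j) (Gam IS g s' j))"
      proof (cases "j \<in> A")
        case True
        then have "s' j = 0" by (simp add: s'_def)
        then show ?thesis using w'0[of j] Gam_nonneg[of g s' IS j, OF g s'0] by auto
      next
        case nA: False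
        have sj: "s' j = s j" using nA by (simp add: s'_def)
        have sg: "s j \<le> (if j \<in> IS then w j + Gam IS g s j else max (w j) (Gam IS g s j))"
          using sgi by (simp add: SGI_def)
        show ?thesis
        proof (cases "j \<in> IS")
          case True
          have "Gam IS g s j \<le> Gam IS g s' j + (\<Sum>k\<in>UNIV. g j k ?B)"
            using True gsplit by (simp add: Gam_def sum.distrib[symmetric] sum_mono)
          then show ?thesis using sg sj True by (simp add: w'_def)
        next
          case False
          have "g j k (s k) \<le> max (w' j) (Gam IS g s' j)" for k
          proof (cases "k \<in> A")
            case True
            then have "g j k (s k) \<le> g j k ?B" using K0_props(4)[OF g[of j k] s[of k]] A(2) by blast
            also have "\<dots> \<le> (\<Sum>k\<in>UNIV. g j k ?B)" by (rule member_le_sum) (auto intro: gB0)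
            also have "\<dots> \<le> w' j" using w(1)[of j] by (simp add: w'_def)
            finally show ?thesis by simp
          next
            case nk: False
            have "g j k (s k) = g j k (s' k)" using nk by (simp add: s'_def)
            also have "\<dots> \<le> Gam IS g s' j" using False by (simp add: Gam_def Max_range_ge)
            finally show ?thesis by simp
          qed
          then have "Gam IS g s j \<le> max (w' j) (Gam IS g s' j)"
            using False by (simp add: Gam_def Max_le_iff)
          moreover have "w j \<le> w' j" using gB0 by (simp add: w'_def sum_nonneg)
          ultimately show ?thesis using sg sj False by auto
        qed
      qed
    qed
    show ?thesis
    proof (cases "s' = (\<lambda>_. 0)")
      case True
      have "\<forall>i. s i \<le> Bm \<alpha> g (Suc m) W"
      proof
        fix i show "s i \<le> Bm \<alpha> g (Suc m) W"
        proof (cases "i \<in> A")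
          case True then show ?thesis using A(2) BS by force
        next
          case False
          then have "s i = 0" using fun_cong[OF \<open>s' = (\<lambda>_. 0)\<close>, of i] by (simp add: s'_def)
          then show ?thesis using BS B0 by linarith
        qed
      qed
      then show ?thesis by (auto intro!: exI[of _ UNIV])
    next
      case False
      obtain i where i: "0 < s' i" "s' i \<le> w' i + kinv \<alpha> (w' i)"
        using sg_step[OF \<alpha> SG g s'0 False w'0 sgi'] by blast
      have iA: "i \<notin> A" using i by (auto simp: s'_def)
      have "s i \<le> psi \<alpha> (W + Gs g ?B)"
        using i iA psi_props(2)[OF \<alpha> w'0 w'W, of i] by (simp add: s'_def psi_def)
      then have "s i \<le> Bm \<alpha> g (Suc m) W" using BS by linarith
      moreover have "Suc m \<le> card (insert i A)" using cA iA by (simp add: card_insert_if)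
      moreover have "\<forall>j\<in>A. s j \<le> Bm \<alpha> g (Suc m) W"
      proof
        fix j assume "j \<in> A"
        then have "s j \<le> ?B" using A(2) by blast
        then show "s j \<le> Bm \<alpha> g (Suc m) W" using BS(1) by linarith
      qed
      ultimately show ?thesis by (intro exI[of _ "insert i A"]) simp
    qed
  qed
qed

lemma small_gain_bound:
  fixes s w :: "'i::finite \<Rightarrow> real"
  assumes \<alpha>: "class_Kinf \<alpha>"
    and SG: "\<forall>s::real^'i. (\<forall>i. 0 \<le> s $ i) \<and> s \<noteq> 0 \<longrightarrow> (\<exists>i. gain_op IS g (D_op IS \<alpha> s) $ i < s $ i)"
    and g: "\<And>i j. class_K0 (g i j)"
    and s: "\<And>i. 0 \<le> s i" and w: "\<And>i. 0 \<le> w i" "\<And>i. w i \<le> W" and sgi: "SGI IS g s w"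
  shows "s i \<le> Bm \<alpha> g CARD('i) W"
proof -
  obtain A where A: "CARD('i) \<le> card A \<or> A = UNIV" "\<forall>i\<in>A. s i \<le> Bm \<alpha> g CARD('i) W"
    using sg_induct[OF assms] by blast
  have "A = UNIV" using A(1) card_seteq[of UNIV A] by auto
  then show ?thesis using A(2) by auto
qed

definition lsol :: "(real \<Rightarrow> 'a::euclidean_space \<Rightarrow> 'a) \<Rightarrow> 'a \<Rightarrow> real \<Rightarrow> (real \<Rightarrow> 'a) \<Rightarrow> bool" where
  "lsol G xi T x \<longleftrightarrow> x 0 = xi \<and> continuous_on {0..T} x
     \<and> (\<forall>t\<in>{0..T}. ((\<lambda>s. G s (x s)) has_integral (x t - xi)) {0..t})"

lemma sol_lsol: "is_solution G xi x \<Longrightarrow> lsol G xi T x"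
  unfolding is_solution_def lsol_def by (auto intro: continuous_on_subset)

lemma lsol_sol:
  assumes "\<And>T. lsol G xi T x" shows "is_solution G xi x"
proof -
  have "continuous_on {0..} x"
    unfolding continuous_on_iff
  proof (intro ballI allI impI)
    fix t0 e :: real assume t0: "t0 \<in> {0..}" and e: "0 < e"
    have "continuous_on {0..t0+1} x" using assms[of "t0+1"] by (simp add: lsol_def)
    then obtain d where d: "d > 0" "\<forall>y\<in>{0..t0+1}. dist y t0 < d \<longrightarrow> dist (x y) (x t0) < e"
      using t0 e unfolding continuous_on_iff by (metis atLeastAtMost_iff atLeast_iff le_add_same_cancel1 zero_le_one)
    show "\<exists>d>0. \<forall>y\<in>{0..}. dist y t0 < d \<longrightarrow> dist (x y) (x t0) < e"
      using d by (intro exI[of _ "min d 1"]) (auto simp: dist_real_def)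
  qed
  moreover have "((\<lambda>s. G s (x s)) has_integral (x t - xi)) {0..t}" if "0 \<le> t" for t
    using assms[of t] that by (simp add: lsol_def)
  moreover have "x 0 = xi" using assms[of 0] by (simp add: lsol_def)
  ultimately show ?thesis unfolding is_solution_def by auto
qed

lemma lsol_mono: "lsol G xi T x \<Longrightarrow> T' \<le> T \<Longrightarrow> lsol G xi T' x"
  unfolding lsol_def by (auto intro: continuous_on_subset)

lemma lsol_cong:
  assumes "lsol G xi T x" "\<And>t. t \<in> {0..T} \<Longrightarrow> y t = x t" "0 \<le> T"
  shows "lsol G xi T y"
  unfolding lsol_def
proof (intro conjI ballI)
  show "y 0 = xi" using assms by (simp add: lsol_def)
  show "continuous_on {0..T} y" using assms continuous_on_eq[of "{0..T}" x y] by (auto simp: lsol_def)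
  fix t assume t: "t \<in> {0..T}"
  have "((\<lambda>s. G s (x s)) has_integral (x t - xi)) {0..t}" using assms t by (simp add: lsol_def)
  then have "((\<lambda>s. G s (y s)) has_integral (x t - xi)) {0..t}"
    by (rule has_integral_eq[rotated]) (use assms t in auto)
  then show "((\<lambda>s. G s (y s)) has_integral (y t - xi)) {0..t}" using assms t by simp
qed

lemma lsol_int:
  assumes "lsol G xi T x" "0 \<le> a" "a \<le> t" "t \<le> T"
  shows "((\<lambda>s. G s (x s)) has_integral (x t - x a)) {a..t}"
proof -
  have h0t: "((\<lambda>s. G s (x s)) has_integral (x t - xi)) {0..t}"
    and h0a: "((\<lambda>s. G s (x s)) has_integral (x a - xi)) {0..a}"
    using assms by (auto simp: lsol_def)
  have "(\<lambda>s. G s (x s)) integrable_on {a..t}"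
    using integrable_subinterval_real[OF has_integral_integrable[OF h0t]] assms by auto
  then obtain I where I: "((\<lambda>s. G s (x s)) has_integral I) {a..t}" by blast
  have "((\<lambda>s. G s (x s)) has_integral (x a - xi + I)) {0..t}"
    using has_integral_combine[OF assms(2,3) h0a I] .
  then have "x a - xi + I = x t - xi" using has_integral_unique h0t by blast
  then have "I = x t - x a" by (simp add: algebra_simps)
  then show ?thesis using I by simp
qed

lemma lsol_glue:
  assumes x: "lsol G xi a x" and a: "0 \<le> a" and y: "lsol (\<lambda>s. G (s + a)) (x a) h y" and h: "0 \<le> h"
  shows "lsol G xi (a + h) (\<lambda>t. if t \<le> a then x t else y (t - a))"
    (is "lsol G xi _ ?z")
  unfolding lsol_def
proof (intro conjI ballI)
  show "?z 0 = xi" using x a by (simp add: lsol_def)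
  have cx: "continuous_on {0..a} x" and cy: "continuous_on {0..h} y" and y0: "y 0 = x a"
    using x y by (auto simp: lsol_def)
  have "continuous_on {t \<in> {0..a+h}. t \<le> a} x"
    by (rule continuous_on_subset[OF cx]) auto
  moreover have "continuous_on {t \<in> {0..a+h}. a \<le> t} (\<lambda>t. y (t - a))"
    by (rule continuous_on_compose2[OF cy]) (auto intro!: continuous_intros)
  ultimately show "continuous_on {0..a+h} ?z"
    using y0 by (intro continuous_on_cases_le) (auto intro: continuous_intros)
  fix t assume t: "t \<in> {0..a+h}"
  show "((\<lambda>s. G s (?z s)) has_integral (?z t - xi)) {0..t}"
  proof (cases "t \<le> a")
    case True
    have "((\<lambda>s. G s (x s)) has_integral (x t - xi)) {0..t}" using x t True by (simp add: lsol_def)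
    then have "((\<lambda>s. G s (?z s)) has_integral (x t - xi)) {0..t}"
      by (rule has_integral_eq[rotated]) (use True t in auto)
    then show ?thesis using True by simp
  next
    case False
    have "((\<lambda>s. G s (x s)) has_integral (x a - xi)) {0..a}"
      using x a by (auto simp: lsol_def)
    then have h0a: "((\<lambda>s. G s (?z s)) has_integral (x a - xi)) {0..a}"
      by (rule has_integral_eq[rotated]) auto
    have "((\<lambda>s. G (s + a) (y s)) has_integral (y (t - a) - x a)) {0..t-a}"
      using y t False by (simp add: lsol_def)
    from has_integral_shift_real_ivl[OF this, of "-a"]
    have "((\<lambda>s. G (s + - a + a) (y (s + - a))) has_integral (y (t - a) - x a)) {0 - - a..t - a - - a}" .
    moreover have "(\<lambda>s. G (s + - a + a) (y (s + - a))) = (\<lambda>s. G s (y (s - a)))" by simp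
    moreover have "{0 - - a..t - a - - a} = {a..t}" by simp
    ultimately have "((\<lambda>s. G s (y (s - a))) has_integral (y (t - a) - x a)) {a..t}" by simp
    then have hat: "((\<lambda>s. G s (?z s)) has_integral (y (t - a) - x a)) {a..t}"
    proof (rule has_integral_eq[rotated])
      fix s assume s: "s \<in> {a..t}"
      show "G s (y (s - a)) = G s (?z s)"
      proof (cases "s \<le> a")
        case True then have "s = a" using s by simp
        then show ?thesis using y0 by simp
      qed simp
    qed
    have at: "a \<le> t" using False by simp
    from has_integral_combine[OF a at h0a hat]
    have hc: "((\<lambda>s. G s (?z s)) has_integral (x a - xi + (y (t - a) - x a))) {0..t}" .
    have eq: "x a - xi + (y (t - a) - x a) = ?z t - xi" using False by simp
    show ?thesis using hc unfolding eq .
  qed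
qed

lemma sol_glue:
  assumes x: "lsol G xi a x" and a: "0 \<le> a" and y: "is_solution (\<lambda>s. G (s + a)) (x a) y"
  shows "is_solution G xi (\<lambda>t. if t \<le> a then x t else y (t - a))"
proof (rule lsol_sol)
  fix T
  have "lsol G xi (a + max 0 (T - a)) (\<lambda>t. if t \<le> a then x t else y (t - a))"
    by (rule lsol_glue[OF x a sol_lsol[OF y]]) simp
  then show "lsol G xi T (\<lambda>t. if t \<le> a then x t else y (t - a))"
    by (rule lsol_mono) simp
qed

lemma linf_le:
  assumes "\<And>t. 0 \<le> t \<Longrightarrow> norm (v t) \<le> B" "0 \<le> B"
  shows "linf_norm v \<le> B" "0 \<le> linf_norm v"
proof -
  have B: "B \<in> {B. 0 \<le> B \<and> (AE t in lborel. 0 \<le> t \<longrightarrow> norm (v t) \<le> B)}"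
    using assms by auto
  show "linf_norm v \<le> B" unfolding linf_norm_def
    by (rule cInf_lower[OF B]) (auto intro!: bdd_belowI[of _ 0])
  show "0 \<le> linf_norm v" unfolding linf_norm_def
    by (rule cInf_greatest) (use B in auto)
qed

lemma linf_AE:
  assumes "Linf u"
  shows "AE t in lborel. 0 \<le> t \<longrightarrow> norm (u t) \<le> linf_norm u" "0 \<le> linf_norm u"
proof -
  let ?S = "{B. 0 \<le> B \<and> (AE t in lborel. 0 \<le> t \<longrightarrow> norm (u t) \<le> B)}"
  obtain B0 where B0: "AE t in lborel. 0 \<le> t \<longrightarrow> norm (u t) \<le> B0" using assms by (auto simp: Linf_def)
  have "AE t in lborel. 0 \<le> t \<longrightarrow> norm (u t) \<le> max B0 0" using B0
  proof eventually_elim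
    case (elim t) then show ?case by auto
  qed
  then have "max B0 0 \<in> ?S" by simp
  then have ne: "?S \<noteq> {}" by blast
  have bdd: "bdd_below ?S" by (auto intro!: bdd_belowI[of _ 0])
  show "0 \<le> linf_norm u" unfolding linf_norm_def by (rule cInf_greatest[OF ne]) auto
  have "\<forall>n::nat. AE t in lborel. 0 \<le> t \<longrightarrow> norm (u t) \<le> linf_norm u + 1 / Suc n"
  proof
    fix n :: nat
    have "Inf ?S < linf_norm u + 1 / Suc n" by (simp add: linf_norm_def)
    then obtain B where B: "B \<in> ?S" "B < linf_norm u + 1 / Suc n"
      using cInf_lessD[OF ne] by blast
    then have "AE t in lborel. 0 \<le> t \<longrightarrow> norm (u t) \<le> B" by simp
    then show "AE t in lborel. 0 \<le> t \<longrightarrow> norm (u t) \<le> linf_norm u + 1 / Suc n"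
    proof eventually_elim
      case (elim t) then show ?case using B(2) by auto
    qed
  qed
  then have "AE t in lborel. \<forall>n::nat. 0 \<le> t \<longrightarrow> norm (u t) \<le> linf_norm u + 1 / Suc n"
    by (subst AE_all_countable) assumption
  then show "AE t in lborel. 0 \<le> t \<longrightarrow> norm (u t) \<le> linf_norm u"
  proof eventually_elim
    case (elim t)
    show ?case
    proof
      assume t: "0 \<le> t"
      show "norm (u t) \<le> linf_norm u"
      proof (rule field_le_epsilon)
        fix e :: real assume e: "0 < e"
        obtain n :: nat where n0: "inverse (real (Suc n)) < e" using reals_Archimedean[OF e] by blast
        then have n: "1 / real (Suc n) < e" by (simp add: inverse_eq_divide)
        have "norm (u t) \<le> linf_norm u + 1 / Suc n" using elim t by blast
        then show "norm (u t) \<le> linf_norm u + e" using n by linarith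
      qed
    qed
  qed
qed

lemma Linf_bdd:
  assumes "(\<lambda>t. indicator {0..} t *\<^sub>R v t) \<in> borel_measurable borel" "\<And>t. norm (v t) \<le> B"
  shows "Linf v"
  using assms unfolding Linf_def by auto

lemma meas_shift:
  fixes v :: "real \<Rightarrow> 'a::euclidean_space"
  assumes m: "(\<lambda>t. indicator {0..} t *\<^sub>R v t) \<in> borel_measurable borel" and a: "0 \<le> a"
  shows "(\<lambda>t. indicator {0..} t *\<^sub>R v (t + a)) \<in> borel_measurable borel"
proof -
  have 1: "(\<lambda>t. indicator {0..} (t + a) *\<^sub>R v (t + a)) \<in> borel_measurable borel"
    using measurable_compose[OF _ m, of "\<lambda>t. t + a"] by simp
  have 2: "(\<lambda>t. indicator {0..} t *\<^sub>R (indicator {0..} (t + a) *\<^sub>R v (t + a))) \<in> borel_measurable borel"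
    using 1 by measurable
  have "(\<lambda>t. indicator {0..} t *\<^sub>R (indicator {0..} (t + a) *\<^sub>R v (t + a))) = (\<lambda>t. indicator {0..} t *\<^sub>R v (t + a))"
    using a by (auto simp: indicator_def fun_eq_iff)
  then show ?thesis using 2 by simp
qed

lemma borel_to_lebesgue_on:
  "F \<in> borel_measurable borel \<Longrightarrow> F \<in> borel_measurable (lebesgue_on S)"
  by (simp add: measurable_completion measurable_restrict_space1)

lemma picard:
  fixes f :: "real^'d \<Rightarrow> real^'m \<Rightarrow> real^'d" and v :: "real \<Rightarrow> real^'m"
  assumes fc: "continuous_on UNIV (\<lambda>(x, u). f x u)"
    and lip: "\<And>u x y. u \<in> cball 0 r \<Longrightarrow> x \<in> cball 0 (R+1) \<Longrightarrow> y \<in> cball 0 (R+1)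
                \<Longrightarrow> norm (f x u - f y u) \<le> L * norm (x - y)"
    and Mb: "\<And>u x. u \<in> cball 0 r \<Longrightarrow> x \<in> cball 0 (R+1) \<Longrightarrow> norm (f x u) \<le> M"
    and h: "0 < h" "h * L \<le> 1/2" "h * M < 1" and L0: "0 \<le> L"
    and xi: "norm xi \<le> R"
    and vm: "(\<lambda>t. indicator {0..} t *\<^sub>R v t) \<in> borel_measurable borel"
    and vb: "\<And>t. norm (v t) \<le> r"
  shows "\<exists>\<phi>. lsol (\<lambda>s z. f z (v s)) xi h \<phi>"
proof -
  define K where "K = cball xi (1::real)"
  have K: "convex K" "closed K" "K \<noteq> {}" by (auto simp: K_def)
  define p where "p = closest_point K"
  have pK: "p x \<in> K" for x unfolding p_def by (rule closest_point_in_set) (use K in auto)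
  have pid: "x \<in> K \<Longrightarrow> p x = x" for x unfolding p_def by (rule closest_point_self)
  have plip: "dist (p x) (p y) \<le> dist x y" for x y unfolding p_def by (rule closest_point_lipschitz[OF K])
  have pc: "continuous_on UNIV p" unfolding p_def by (rule continuous_on_closest_point[OF K])
  have KR: "p x \<in> cball 0 (R+1)" for x
  proof -
    have "norm (xi - p x) \<le> 1" using pK[of x] by (simp add: K_def dist_norm)
    moreover have "norm (p x) \<le> norm xi + norm (p x - xi)"
      using norm_triangle_ineq[of xi "p x - xi"] by simp
    ultimately show ?thesis using xi by (simp add: norm_minus_commute)
  qed
  define V where "V = (\<lambda>t. indicator {0..} t *\<^sub>R v t)"
  have r0: "0 \<le> r" using norm_ge_zero[of "v 0"] vb[of 0] by linarith
  have Vb: "V t \<in> cball 0 r" for t using vb[of t] r0 by (auto simp: V_def indicator_def)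
  have Vm: "V \<in> borel_measurable borel" using vm by (simp add: V_def)
  have M0: "0 \<le> M" using Mb[OF Vb KR, of 0 0] norm_ge_zero order_trans by blast
  define F where "F = (\<lambda>\<psi> s. f (p (\<psi> s)) (V s))"
  have Fb: "norm (F \<psi> s) \<le> M" for \<psi> s unfolding F_def by (rule Mb[OF Vb KR])
  have Hc: "continuous_on UNIV (\<lambda>z::(real^'d) \<times> (real^'m). f (p (fst z)) (snd z))"
  proof -
    have "continuous_on UNIV (\<lambda>z::(real^'d) \<times> (real^'m). (p (fst z), snd z))"
      by (intro continuous_intros continuous_on_compose2[OF pc]) auto
    from continuous_on_compose2[OF fc this] show ?thesis by simp
  qed
  have Fm: "F \<psi> \<in> borel_measurable borel" if "continuous_on UNIV \<psi>" for \<psi>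
    unfolding F_def
    by (rule borel_measurable_continuous_Pair[OF borel_measurable_continuous_onI[OF that] Vm]) (use Hc in simp)
  have Fi: "F \<psi> integrable_on {a..b}" if "continuous_on UNIV \<psi>" for \<psi> a b
    by (rule measurable_bounded_by_integrable_imp_integrable[where g = "\<lambda>_. M"])
      (use Fm[OF that] Fb in \<open>auto intro: borel_to_lebesgue_on\<close>)
  define I where "I = (\<lambda>\<psi> c. integral {0..c} (F \<psi>))"
  have Idiff: "norm (I \<psi> b - I \<psi> a) \<le> M * (b - a)" if "continuous_on UNIV \<psi>" "0 \<le> a" "a \<le> b" for \<psi> a b
  proof -
    have "I \<psi> b - I \<psi> a = integral {a..b} (F \<psi>)"
      using Henstock_Kurzweil_Integration.integral_combine[OF that(2,3) Fi[OF that(1)], symmetric] by (simp add: I_def)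
    also have "norm \<dots> \<le> M * Henstock_Kurzweil_Integration.content (cbox a b)"
      by (rule has_integral_bound[OF M0 _ Fb]) (use Fi[OF that(1), of a b] in auto)
    finally show ?thesis using that by simp
  qed
  define cl where "cl = (\<lambda>t::real. max 0 (min h t))"
  have cl: "0 \<le> cl t" "cl t \<le> h" "\<bar>cl t - cl t'\<bar> \<le> \<bar>t - t'\<bar>" for t t'
    using h by (auto simp: cl_def)
  define Pf where "Pf = (\<lambda>\<psi>::(real, real^'d) bcontfun. \<lambda>t. xi + I (apply_bcontfun \<psi>) (cl t))"
  have Pfl: "norm (Pf \<psi> t - Pf \<psi> t') \<le> M * \<bar>t - t'\<bar>" for \<psi> t t'
  proof -
    have *: "norm (I (apply_bcontfun \<psi>) (cl t) - I (apply_bcontfun \<psi>) (cl t')) \<le> M * \<bar>cl t - cl t'\<bar>"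
    proof (cases "cl t' \<le> cl t")
      case True then show ?thesis using Idiff[of "apply_bcontfun \<psi>" "cl t'" "cl t"] cl by auto
    next
      case False then show ?thesis using Idiff[of "apply_bcontfun \<psi>" "cl t" "cl t'"] cl
        by (auto simp: norm_minus_commute)
    qed
    have "M * \<bar>cl t - cl t'\<bar> \<le> M * \<bar>t - t'\<bar>" using M0 cl by (intro mult_left_mono) auto
    then show ?thesis using * by (simp add: Pf_def)
  qed
  have Pfb: "Pf \<psi> \<in> bcontfun" for \<psi>
  proof (rule bcontfun_normI)
    show "continuous_on UNIV (Pf \<psi>)"
      unfolding continuous_on_iff
    proof (intro ballI allI impI)
      fix t e :: real assume "0 < e"
      show "\<exists>d>0. \<forall>t'\<in>UNIV. dist t' t < d \<longrightarrow> dist (Pf \<psi> t') (Pf \<psi> t) < e"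
      proof (intro exI[of _ "e / (M + 1)"] conjI ballI impI)
        show "0 < e / (M + 1)" using \<open>0 < e\<close> M0 by simp
        fix t' assume "dist t' t < e / (M + 1)"
        then have "(M + 1) * \<bar>t' - t\<bar> < e" using M0 by (simp add: dist_real_def field_simps)
        moreover have "M * \<bar>t' - t\<bar> \<le> (M + 1) * \<bar>t' - t\<bar>" by (simp add: distrib_right)
        ultimately show "dist (Pf \<psi> t') (Pf \<psi> t) < e"
          using Pfl[of \<psi> t' t] by (simp add: dist_norm)
      qed
    qed
    fix t
    have "norm (I (apply_bcontfun \<psi>) (cl t) - I (apply_bcontfun \<psi>) 0) \<le> M * (cl t - 0)"
      by (rule Idiff) (use cl in auto)
    moreover have "I (apply_bcontfun \<psi>) 0 = 0" by (simp add: I_def)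
    moreover have "M * cl t \<le> M * h" using cl M0 by (intro mult_left_mono) auto
    ultimately have "norm (I (apply_bcontfun \<psi>) (cl t)) \<le> M * h" by simp
    then show "norm (Pf \<psi> t) \<le> norm xi + M * h"
      unfolding Pf_def using norm_triangle_ineq[of xi] by (smt (verit))
  qed
  define P where "P = (\<lambda>\<psi>. Bcontfun (Pf \<psi>))"
  have Pa: "apply_bcontfun (P \<psi>) = Pf \<psi>" for \<psi>
    unfolding P_def using Pfb[of \<psi>] by (simp add: Bcontfun_inverse)
  have contr: "dist (P \<psi>1) (P \<psi>2) \<le> (1/2) * dist \<psi>1 \<psi>2" for \<psi>1 \<psi>2
  proof (rule dist_bound)
    fix t
    let ?c = "cl t" and ?a = "apply_bcontfun \<psi>1" and ?b = "apply_bcontfun \<psi>2"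
    have i1: "(F ?a has_integral I ?a ?c) {0..?c}" unfolding I_def by (rule integrable_integral[OF Fi]) simp
    have i2: "(F ?b has_integral I ?b ?c) {0..?c}" unfolding I_def by (rule integrable_integral[OF Fi]) simp
    have "((\<lambda>s. F ?a s - F ?b s) has_integral (I ?a ?c - I ?b ?c)) {0..?c}"
      by (rule has_integral_diff[OF i1 i2])
    moreover have "norm (F ?a s - F ?b s) \<le> L * dist \<psi>1 \<psi>2" for s
    proof -
      have "norm (F ?a s - F ?b s) \<le> L * norm (p (?a s) - p (?b s))"
        unfolding F_def by (rule lip[OF Vb KR KR])
      also have "\<dots> \<le> L * dist (?a s) (?b s)"
        using plip[of "?a s" "?b s"] L0 by (intro mult_left_mono) (auto simp: dist_norm)
      also have "\<dots> \<le> L * dist \<psi>1 \<psi>2" using dist_bounded L0 by (intro mult_left_mono) auto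
      finally show ?thesis .
    qed
    ultimately have "norm (I ?a ?c - I ?b ?c) \<le> L * dist \<psi>1 \<psi>2 * Henstock_Kurzweil_Integration.content (cbox 0 ?c)"
      by (intro has_integral_bound[where f = "\<lambda>s. F ?a s - F ?b s"]) (auto simp: L0)
    also have "\<dots> \<le> L * dist \<psi>1 \<psi>2 * h" using cl L0 by (intro mult_left_mono) auto
    also have "\<dots> = (h * L) * dist \<psi>1 \<psi>2" by (simp add: algebra_simps)
    also have "\<dots> \<le> (1/2) * dist \<psi>1 \<psi>2" by (rule mult_right_mono[OF h(2) zero_le_dist])
    finally show "dist (P \<psi>1 t) (P \<psi>2 t) \<le> (1/2) * dist \<psi>1 \<psi>2"
      by (simp add: Pa Pf_def dist_norm)
  qed
  obtain \<phi> where \<phi>: "P \<phi> = \<phi>"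
    using banach_fix_type[of "1/2" P] contr by auto
  let ?f = "apply_bcontfun \<phi>"
  have fx: "?f t = xi + I ?f (cl t)" for t
  proof -
    have "apply_bcontfun (P \<phi>) t = ?f t" using \<phi> by simp
    then have "Pf \<phi> t = ?f t" by (simp add: Pa)
    then show ?thesis by (simp add: Pf_def)
  qed
  have inK: "?f t \<in> K" if "t \<in> {0..h}" for t
  proof -
    have "norm (I ?f (cl t) - I ?f 0) \<le> M * (cl t - 0)" by (rule Idiff) (use cl in auto)
    moreover have "I ?f 0 = 0" by (simp add: I_def)
    moreover have "M * cl t \<le> M * h" using cl M0 by (intro mult_left_mono) auto
    moreover have "M * h < 1" using h(3) by (simp add: mult.commute)
    ultimately have "norm (I ?f (cl t)) \<le> 1" by simp
    then show ?thesis using fx[of t] by (simp add: K_def dist_norm)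
  qed
  have "lsol (\<lambda>s z. f z (v s)) xi h ?f"
    unfolding lsol_def
  proof (intro conjI ballI)
    show "?f 0 = xi" using fx[of 0] by (simp add: cl_def I_def)
    show "continuous_on {0..h} ?f" by simp
    fix t assume t: "t \<in> {0..h}"
    have "(F ?f has_integral I ?f t) {0..t}" unfolding I_def by (rule integrable_integral[OF Fi]) simp
    moreover have "I ?f t = ?f t - xi" using fx[of t] t by (simp add: cl_def)
    ultimately have "(F ?f has_integral (?f t - xi)) {0..t}" by simp
    then show "((\<lambda>s. f (?f s) (v s)) has_integral (?f t - xi)) {0..t}"
    proof (rule has_integral_eq[rotated])
      fix s assume s: "s \<in> {0..t}"
      then have "p (?f s) = ?f s" using inK[of s] t by (intro pid) auto
      moreover have "V s = v s" using s by (simp add: V_def)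
      ultimately show "F ?f s = f (?f s) (v s)" by (simp add: F_def)
    qed
  qed
  then show ?thesis by blast
qed

lemma lip_compact:
  fixes f :: "real^'d \<Rightarrow> real^'m \<Rightarrow> real^'d"
  assumes fc: "continuous_on UNIV (\<lambda>(x, u). f x u)"
    and flip: "\<And>x0 r. \<exists>\<delta>>0. \<exists>L. \<forall>x\<in>ball x0 \<delta>. \<forall>y\<in>ball x0 \<delta>. \<forall>u. norm u \<le> r \<longrightarrow>
                  norm (f x u - f y u) \<le> L * norm (x - y)"
  shows "\<exists>L\<ge>0. \<forall>u x y. u \<in> cball 0 r \<longrightarrow> x \<in> cball 0 R \<longrightarrow> y \<in> cball 0 R \<longrightarrow>
            norm (f x u - f y u) \<le> L * norm (x - y)"
proof -
  have ll: "local_lipschitz (cball 0 r) (cball 0 R) (\<lambda>u x. f x u)"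
  proof (rule local_lipschitzI)
    fix t x :: "_" assume "t \<in> cball (0::real^'m) r" "x \<in> cball (0::real^'d) R"
    obtain \<delta> L where d: "\<delta> > 0" "\<forall>x'\<in>ball x \<delta>. \<forall>y\<in>ball x \<delta>. \<forall>u. norm u \<le> r \<longrightarrow>
                  norm (f x' u - f y u) \<le> L * norm (x' - y)"
      using flip[of x r] by blast
    have "\<forall>t'\<in>cball t (\<delta>/2) \<inter> cball 0 r. (max L 0)-lipschitz_on (cball x (\<delta>/2) \<inter> cball 0 R) (\<lambda>x. f x t')"
    proof (intro ballI lipschitz_onI)
      fix t' a b assume t': "t' \<in> cball t (\<delta>/2) \<inter> cball 0 r"
        and a: "a \<in> cball x (\<delta>/2) \<inter> cball 0 R" and b: "b \<in> cball x (\<delta>/2) \<inter> cball 0 R"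
      have "a \<in> ball x \<delta>" "b \<in> ball x \<delta>" using a b d(1) by auto
      moreover have "norm t' \<le> r" using t' by auto
      ultimately have "norm (f a t' - f b t') \<le> L * norm (a - b)" using d(2) by blast
      also have "\<dots> \<le> max L 0 * norm (a - b)" by (intro mult_right_mono) auto
      finally show "dist (f a t') (f b t') \<le> max L 0 * dist a b" by (simp add: dist_norm)
    qed simp
    then show "\<exists>u>0. \<exists>L. \<forall>t\<in>cball t u \<inter> cball 0 r. L-lipschitz_on (cball x u \<inter> cball 0 R) (\<lambda>x. f x t)"
      using d(1) by (intro exI[of _ "\<delta>/2"]) auto
  qed
  have cont: "continuous_on (cball 0 r) (\<lambda>u. f x u)" for x
  proof -
    have "continuous_on (cball 0 r) (\<lambda>u. (x, u))" by (intro continuous_intros)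
    from continuous_on_compose2[OF fc this] show ?thesis by simp
  qed
  obtain L where L: "\<And>u. u \<in> cball 0 r \<Longrightarrow> L-lipschitz_on (cball 0 R) (\<lambda>x. f x u)"
    using local_lipschitz_compact_implies_lipschitz[OF ll compact_cball compact_cball cont] by blast
  have "norm (f x u - f y u) \<le> max L 0 * norm (x - y)"
    if "u \<in> cball 0 r" "x \<in> cball 0 R" "y \<in> cball 0 R" for u x y
  proof -
    have "0 \<le> L" using lipschitz_on_nonneg[OF L[OF that(1)]] .
    then show ?thesis using lipschitz_onD[OF L[OF that(1)] that(2,3)] by (simp add: dist_norm)
  qed
  moreover have "0 \<le> max L 0" by simp
  ultimately show ?thesis by blast
qed

lemma lsol_bounded:
  assumes "lsol G xi T x"
  obtains R where "\<And>t. t \<in> {0..T} \<Longrightarrow> norm (x t) \<le> R"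
proof -
  have "compact (x ` {0..T})"
    using assms by (intro compact_continuous_image) (auto simp: lsol_def)
  then obtain R where "\<forall>y\<in>x ` {0..T}. norm y \<le> R"
    using compact_imp_bounded bounded_iff by metis
  then show ?thesis by (intro that[of R]) auto
qed

lemma lsol_unique:
  fixes f :: "real^'d \<Rightarrow> real^'m \<Rightarrow> real^'d"
  assumes lipR: "\<And>R. \<exists>L\<ge>0. \<forall>u x y. u \<in> cball 0 r \<longrightarrow> x \<in> cball 0 R \<longrightarrow> y \<in> cball 0 R \<longrightarrow>
            norm (f x u - f y u) \<le> L * norm (x - y)"
    and vb: "\<And>t. norm (v t) \<le> r"
    and x: "lsol (\<lambda>s z. f z (v s)) xi T x" and y: "lsol (\<lambda>s z. f z (v s)) xi T y"
  shows "\<forall>t\<in>{0..T}. x t = y t"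
proof -
  obtain R1 where R1: "\<And>t. t \<in> {0..T} \<Longrightarrow> norm (x t) \<le> R1" using lsol_bounded[OF x] by blast
  obtain R2 where R2: "\<And>t. t \<in> {0..T} \<Longrightarrow> norm (y t) \<le> R2" using lsol_bounded[OF y] by blast
  define R where "R = max R1 R2"
  obtain L where L: "0 \<le> L" "\<And>u a b. u \<in> cball 0 r \<Longrightarrow> a \<in> cball 0 R \<Longrightarrow> b \<in> cball 0 R \<Longrightarrow>
            norm (f a u - f b u) \<le> L * norm (a - b)"
    using lipR[of R] by blast
  define h where "h = 1 / (2 * L + 2)"
  have h: "0 < h" "h * L \<le> 1/2" using L(1) by (auto simp: h_def field_simps)
  have cx: "continuous_on {0..T} x" and cy: "continuous_on {0..T} y" using x y by (auto simp: lsol_def)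
  have step: "\<forall>t\<in>{0..min T (real k * h)}. x t = y t" for k :: nat
  proof (induction k)
    case 0
    have "x 0 = y 0" using x y by (simp add: lsol_def)
    then show ?case by auto
  next
    case (Suc k)
    define a where "a = min T (real k * h)"
    define b where "b = min T (real (Suc k) * h)"
    show ?case
    proof (cases "0 \<le> T")
      case False then show ?thesis by auto
    next
      case T0: True
      have a0: "0 \<le> a" and ab: "a \<le> b" and bT: "b \<le> T" and ba: "b - a \<le> h"
        using T0 h(1) by (auto simp: a_def b_def min_def algebra_simps)
      have xa: "x a = y a" using Suc.IH a0 by (simp add: a_def)
      have "continuous_on {a..b} (\<lambda>t. norm (x t - y t))"
        by (intro continuous_intros continuous_on_subset[OF cx] continuous_on_subset[OF cy])
           (use a0 bT in auto)
      then obtain tm where tm: "tm \<in> {a..b}" "\<And>t. t \<in> {a..b} \<Longrightarrow> norm (x t - y t) \<le> norm (x tm - y tm)"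
        using continuous_attains_sup[of "{a..b}" "\<lambda>t. norm (x t - y t)"] ab by auto
      define D where "D = norm (x tm - y tm)"
      have bound: "norm (x t - y t) \<le> D / 2" if t: "t \<in> {a..b}" for t
      proof -
        have ix: "((\<lambda>s. f (x s) (v s)) has_integral (x t - x a)) {a..t}"
          by (rule lsol_int[OF x a0]) (use t bT in auto)
        have iy: "((\<lambda>s. f (y s) (v s)) has_integral (y t - y a)) {a..t}"
          by (rule lsol_int[OF y a0]) (use t bT in auto)
        have "((\<lambda>s. f (x s) (v s) - f (y s) (v s)) has_integral (x t - y t)) {a..t}"
          using has_integral_diff[OF ix iy] xa by simp
        moreover have "norm (f (x s) (v s) - f (y s) (v s)) \<le> L * D" if s: "s \<in> cbox a t" for s
        proof -
          have s': "s \<in> {0..T}" "s \<in> {a..b}" using s t a0 bT by auto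
          have "norm (f (x s) (v s) - f (y s) (v s)) \<le> L * norm (x s - y s)"
            using vb[of s] R1[OF s'(1)] R2[OF s'(1)] by (intro L(2)) (auto simp: R_def)
          also have "\<dots> \<le> L * D" using tm(2)[OF s'(2)] L(1) by (simp add: D_def mult_left_mono)
          finally show ?thesis .
        qed
        ultimately have "norm (x t - y t) \<le> L * D * Henstock_Kurzweil_Integration.content (cbox a t)"
          using L(1) by (intro has_integral_bound[where f = "\<lambda>s. f (x s) (v s) - f (y s) (v s)"])
             (auto simp: D_def)
        also have "\<dots> = L * D * (t - a)" using t by simp
        also have "\<dots> \<le> L * D * h" using t ba L(1) by (intro mult_left_mono) (auto simp: D_def)
        also have "\<dots> = (h * L) * D" by (simp add: algebra_simps)
        also have "\<dots> \<le> (1/2) * D" by (rule mult_right_mono[OF h(2)]) (simp add: D_def)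
        finally show ?thesis by simp
      qed
      have "D \<le> D / 2" using bound[OF tm(1)] by (simp add: D_def)
      then have D0: "D \<le> 0" by simp
      have "x t = y t" if t: "t \<in> {0..min T (real (Suc k) * h)}" for t
      proof (cases "t \<le> a")
        case True then show ?thesis using Suc.IH t by (auto simp: a_def)
      next
        case False
        then have "t \<in> {a..b}" using t by (auto simp: b_def)
        then have "norm (x t - y t) \<le> 0" using tm(2) D0 by (force simp: D_def)
        then show ?thesis by simp
      qed
      then show ?thesis by blast
    qed
  qed
  show ?thesis
  proof
    fix t assume t: "t \<in> {0..T}"
    obtain k :: nat where k: "T / h \<le> real k" using real_arch_simple by blast
    then have "T \<le> real k * h" using h(1) by (simp add: field_simps)
    then show "x t = y t" using step[of k] t by auto
  qed
qed

lemma lsol_const0: "lsol G xi 0 (\<lambda>_. xi)"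
  unfolding lsol_def by (auto intro: has_integral_null)

lemma global_exist:
  fixes f :: "real^'d \<Rightarrow> real^'m \<Rightarrow> real^'d"
  assumes fc: "continuous_on UNIV (\<lambda>(x, u). f x u)"
    and lipR: "\<And>R. \<exists>L\<ge>0. \<forall>u x y. u \<in> cball 0 r \<longrightarrow> x \<in> cball 0 R \<longrightarrow> y \<in> cball 0 R \<longrightarrow>
            norm (f x u - f y u) \<le> L * norm (x - y)"
    and vb: "\<And>t. norm (v t) \<le> r"
    and vm: "(\<lambda>t. indicator {0..} t *\<^sub>R v t) \<in> borel_measurable borel"
    and apriori: "\<And>T x t. lsol (\<lambda>s z. f z (v s)) xi T x \<Longrightarrow> t \<in> {0..T} \<Longrightarrow> norm (x t) \<le> C"
  shows "\<exists>x. is_solution (\<lambda>s z. f z (v s)) xi x"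
proof -
  let ?G = "\<lambda>s z. f z (v s)"
  have r0: "0 \<le> r" using norm_ge_zero[of "v 0"] vb[of 0] by linarith
  obtain L where L: "0 \<le> L" "\<And>u a b. u \<in> cball 0 r \<Longrightarrow> a \<in> cball 0 (C+1) \<Longrightarrow> b \<in> cball 0 (C+1) \<Longrightarrow>
            norm (f a u - f b u) \<le> L * norm (a - b)"
    using lipR[of "C+1"] by blast
  have "compact ((\<lambda>(x, u). f x u) ` (cball 0 (C+1) \<times> cball 0 r))"
    by (intro compact_continuous_image continuous_on_subset[OF fc] compact_Times) auto
  then obtain M where M: "\<forall>z\<in>(\<lambda>(x, u). f x u) ` (cball 0 (C+1) \<times> cball 0 r). norm z \<le> M"
    using compact_imp_bounded bounded_iff by metis
  have Mb: "norm (f x u) \<le> M" if "u \<in> cball 0 r" "x \<in> cball 0 (C+1)" for u x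
    using M that by force
  have C0: "norm xi \<le> C" using apriori[OF lsol_const0, of 0] by simp
  have "norm (f 0 0) \<le> M" using Mb[of 0 0] r0 C0 norm_ge_zero[of xi] by simp
  then have M0: "0 \<le> M" using norm_ge_zero[of "f 0 0"] by linarith
  define h where "h = min (1 / (2 * L + 2)) (1 / (2 * M + 2))"
  have h: "0 < h" "h * L \<le> 1/2" "h * M < 1"
  proof -
    show "0 < h" using L(1) M0 by (simp add: h_def)
    have "h * L \<le> (1 / (2 * L + 2)) * L" using L(1) by (intro mult_right_mono) (auto simp: h_def)
    also have "\<dots> \<le> 1/2" using L(1) by (simp add: field_simps)
    finally show "h * L \<le> 1/2" .
    have "h * M \<le> (1 / (2 * M + 2)) * M" using M0 by (intro mult_right_mono) (auto simp: h_def)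
    also have "\<dots> < 1" using M0 by (simp add: field_simps)
    finally show "h * M < 1" .
  qed
  have ex: "\<exists>x. lsol ?G xi (real k * h) x" for k :: nat
  proof (induction k)
    case 0 then show ?case using lsol_const0 by auto
  next
    case (Suc k)
    then obtain x where x: "lsol ?G xi (real k * h) x" by blast
    let ?a = "real k * h"
    have a0: "0 \<le> ?a" using h(1) by simp
    have xb: "norm (x ?a) \<le> C" by (rule apriori[OF x]) (use a0 in simp)
    have vm': "(\<lambda>t. indicator {0..} t *\<^sub>R v (t + ?a)) \<in> borel_measurable borel"
      by (rule meas_shift[OF vm a0])
    obtain \<phi> where \<phi>: "lsol (\<lambda>s z. f z (v (s + ?a))) (x ?a) h \<phi>"
      using picard[OF fc L(2) Mb h L(1) xb vm' vb] by blast
    have "lsol ?G xi (?a + h) (\<lambda>t. if t \<le> ?a then x t else \<phi> (t - ?a))"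
      by (rule lsol_glue[OF x a0 _ less_imp_le[OF h(1)]]) (use \<phi> in simp)
    moreover have "?a + h = real (Suc k) * h" by (simp add: algebra_simps)
    ultimately show ?case by auto
  qed
  then obtain X where X: "\<And>k. lsol ?G xi (real k * h) (X k)" by metis
  define K where "K = (\<lambda>t::real. nat \<lceil>t / h\<rceil>)"
  have K: "t \<le> real (K t) * h" for t
  proof -
    have "t / h \<le> real (K t)" unfolding K_def by linarith
    then show ?thesis using h(1) by (simp add: field_simps)
  qed
  define Y where "Y = (\<lambda>t. X (K t) t)"
  have YT: "lsol ?G xi T Y" if T: "0 \<le> T" for T
  proof (rule lsol_cong[OF lsol_mono[OF X[of "K T"] K] _ T])
    fix t assume t: "t \<in> {0..T}"
    have "\<forall>s\<in>{0..t}. X (K t) s = X (K T) s"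
      by (rule lsol_unique[OF lipR vb lsol_mono[OF X K] lsol_mono[OF X]]) (use K[of T] t in auto)
    then show "Y t = X (K T) t" using t by (auto simp: Y_def)
  qed
  have "lsol ?G xi T Y" for T
  proof (cases "0 \<le> T")
    case True then show ?thesis by (rule YT)
  next
    case False then show ?thesis using lsol_mono[OF YT[of 0]] by simp
  qed
  then show ?thesis using lsol_sol by blast
qed

lemma sub_bound:
  fixes f :: "real^'d \<Rightarrow> real^'m \<Rightarrow> real^'d" and b :: "'d \<Rightarrow> 'i::finite"
  assumes sub_GS: "\<And>i xi w u. blk b i xi = xi \<Longrightarrow> Linf w \<Longrightarrow> Linf u \<Longrightarrow>
        (\<exists>y. is_solution (sub_rhs b f i w u) xi y)
      \<and> (\<forall>y y'. is_solution (sub_rhs b f i w u) xi y \<longrightarrow> is_solution (sub_rhs b f i w u) xi y'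
              \<longrightarrow> (\<forall>t\<ge>0. y t = y' t))
      \<and> (\<forall>y. is_solution (sub_rhs b f i w u) xi y \<longrightarrow> (\<forall>t\<ge>0.
            norm (y t) \<le>
             (if i \<in> IS then
                \<sigma> i (norm xi)
                + (\<Sum>j\<in>UNIV. g i j (linf_norm (trunc 0 t
                      (\<lambda>s. blk b j (y s + (w s - blk b i (w s)))))))
                + gu i (linf_norm u)
              else
                max (\<sigma> i (norm xi))
                  (max (Max (range (\<lambda>j. g i j (linf_norm (trunc 0 t
                      (\<lambda>s. blk b j (y s + (w s - blk b i (w s)))))))))
                    (gu i (linf_norm u))))))"
    and vb: "\<And>t. norm (v t) \<le> r"
    and vm: "(\<lambda>t. indicator {0..} t *\<^sub>R v t) \<in> borel_measurable borel"
    and x: "lsol (\<lambda>s z. f z (v s)) x0 T x"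
    and tau: "tau \<in> {0..T}"
  shows "norm (blk b i (x tau)) \<le>
             (if i \<in> IS then
                \<sigma> i (norm (blk b i x0))
                + (\<Sum>j\<in>UNIV. g i j (linf_norm (trunc 0 tau (\<lambda>s. blk b j (x s)))))
                + gu i (linf_norm v)
              else
                max (\<sigma> i (norm (blk b i x0)))
                  (max (Max (range (\<lambda>j. g i j (linf_norm (trunc 0 tau (\<lambda>s. blk b j (x s)))))))
                    (gu i (linf_norm v))))"
proof -
  have T0: "0 \<le> T" using tau by simp
  obtain R where R: "\<And>t. t \<in> {0..T} \<Longrightarrow> norm (x t) \<le> R" using lsol_bounded[OF x] by blast
  have cx: "continuous_on {0..T} x" using x by (simp add: lsol_def)
  define w where "w = trunc 0 T x"
  have wb: "norm (w t) \<le> max R 0" for t using R[of t] by (auto simp: w_def trunc_def)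
  have wm: "(\<lambda>t. indicator {0..} t *\<^sub>R w t) \<in> borel_measurable borel"
  proof -
    have "(\<lambda>t. indicator {0..T} t *\<^sub>R x t) \<in> borel_measurable borel"
      by (rule borel_measurable_continuous_on_indicator[OF _ cx]) simp
    moreover have "(\<lambda>t. indicator {0..} t *\<^sub>R w t) = (\<lambda>t. indicator {0..T} t *\<^sub>R x t)"
      by (auto simp: w_def trunc_def indicator_def fun_eq_iff)
    ultimately show ?thesis by simp
  qed
  have Lw: "Linf w" by (rule Linf_bdd[OF wm wb])
  have Lv: "Linf v" by (rule Linf_bdd[OF vm vb])
  define yi where "yi = (\<lambda>t. blk b i (x t))"
  have bl: "bounded_linear (blk b i)" by (rule blk_linear)
  have lyi: "lsol (sub_rhs b f i w v) (blk b i x0) T yi"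
    unfolding lsol_def
  proof (intro conjI ballI)
    show "yi 0 = blk b i x0" using x by (simp add: lsol_def yi_def)
    show "continuous_on {0..T} yi" unfolding yi_def by (rule bounded_linear.continuous_on[OF bl cx])
    fix t assume t: "t \<in> {0..T}"
    have "((\<lambda>s. f (x s) (v s)) has_integral (x t - x0)) {0..t}" using x t by (simp add: lsol_def)
    from has_integral_linear[OF this bl]
    have "((\<lambda>s. blk b i (f (x s) (v s))) has_integral (yi t - blk b i x0)) {0..t}"
      by (simp add: o_def yi_def linear_diff[OF bounded_linear.linear[OF bl]])
    then show "((\<lambda>s. sub_rhs b f i w v s (yi s)) has_integral (yi t - blk b i x0)) {0..t}"
    proof (rule has_integral_eq[rotated])
      fix s assume s: "s \<in> {0..t}"
      then have "w s = x s" using t by (simp add: w_def trunc_def)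
      then show "blk b i (f (x s) (v s)) = sub_rhs b f i w v s (yi s)"
        by (simp add: sub_rhs_def yi_def)
    qed
  qed
  define w' where "w' = (\<lambda>s. w (s + T))"
  define v' where "v' = (\<lambda>s. v (s + T))"
  have Lw': "Linf w'" unfolding w'_def by (rule Linf_bdd[OF meas_shift[OF wm T0] wb])
  have Lv': "Linf v'" unfolding v'_def by (rule Linf_bdd[OF meas_shift[OF vm T0] vb])
  have byT: "blk b i (yi T) = yi T" by (simp add: yi_def)
  obtain y' where y': "is_solution (sub_rhs b f i w' v') (yi T) y'"
    using sub_GS[OF byT Lw' Lv'] by blast
  have shift: "(\<lambda>s. sub_rhs b f i w v (s + T)) = sub_rhs b f i w' v'"
    by (simp add: sub_rhs_def w'_def v'_def fun_eq_iff)
  define z where "z = (\<lambda>t. if t \<le> T then yi t else y' (t - T))"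
  have zs: "is_solution (sub_rhs b f i w v) (blk b i x0) z"
    unfolding z_def by (rule sol_glue[OF lyi T0]) (use y' shift in simp)
  have bx0: "blk b i (blk b i x0) = blk b i x0" by simp
  have tau0: "0 \<le> tau" using tau by simp
  note zb = conjunct2[OF conjunct2[OF sub_GS[OF bx0 Lw Lv]], rule_format, OF zs tau0]
  have ztau: "z tau = yi tau" using tau by (simp add: z_def)
  have tr: "trunc 0 tau (\<lambda>s. blk b j (z s + (w s - blk b i (w s)))) = trunc 0 tau (\<lambda>s. blk b j (x s))" for j
  proof -
    have "z s + (w s - blk b i (w s)) = x s" if "0 \<le> s" "s \<le> tau" for s
      using that tau by (simp add: z_def yi_def w_def trunc_def)
    then show ?thesis by (auto simp: trunc_def fun_eq_iff)
  qed
  show ?thesis using zb by (simp only: ztau tr yi_def)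
qed

lemma Max_range_mono:
  fixes F G :: "'i::finite \<Rightarrow> real"
  assumes "\<And>j. F j \<le> G j" shows "Max (range F) \<le> Max (range G)"
proof (rule Max.boundedI)
  show "finite (range F)" by simp
  show "range F \<noteq> {}" by simp
  fix a assume "a \<in> range F"
  then obtain j where "a = F j" by auto
  then show "a \<le> Max (range G)" using assms[of j] Max_range_ge[of G j] by linarith
qed

lemma max_helper: "(a::real) \<le> max s (max m c) \<Longrightarrow> m \<le> M \<Longrightarrow> a \<le> max (max s c) M"
  unfolding max_def by (auto split: if_splits)

lemma apriori:
  fixes f :: "real^'d \<Rightarrow> real^'m \<Rightarrow> real^'d" and b :: "'d \<Rightarrow> 'i::finite"
  assumes sub_GS: "\<And>i xi w u. blk b i xi = xi \<Longrightarrow> Linf w \<Longrightarrow> Linf u \<Longrightarrow>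
        (\<exists>y. is_solution (sub_rhs b f i w u) xi y)
      \<and> (\<forall>y y'. is_solution (sub_rhs b f i w u) xi y \<longrightarrow> is_solution (sub_rhs b f i w u) xi y'
              \<longrightarrow> (\<forall>t\<ge>0. y t = y' t))
      \<and> (\<forall>y. is_solution (sub_rhs b f i w u) xi y \<longrightarrow> (\<forall>t\<ge>0.
            norm (y t) \<le>
             (if i \<in> IS then
                \<sigma> i (norm xi)
                + (\<Sum>j\<in>UNIV. g i j (linf_norm (trunc 0 t
                      (\<lambda>s. blk b j (y s + (w s - blk b i (w s)))))))
                + gu i (linf_norm u)
              else
                max (\<sigma> i (norm xi))
                  (max (Max (range (\<lambda>j. g i j (linf_norm (trunc 0 t
                      (\<lambda>s. blk b j (y s + (w s - blk b i (w s)))))))))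
                    (gu i (linf_norm u))))))"
    and gains: "\<And>i. class_K0 (\<sigma> i)" "\<And>i j. class_K0 (g i j)" "\<And>i. class_K0 (gu i)"
    and \<alpha>: "class_Kinf \<alpha>"
    and SG: "\<forall>s::real^'i. (\<forall>i. 0 \<le> s $ i) \<and> s \<noteq> 0 \<longrightarrow> (\<exists>i. gain_op IS g (D_op IS \<alpha> s) $ i < s $ i)"
    and vb: "\<And>t. norm (v t) \<le> r"
    and vm: "(\<lambda>t. indicator {0..} t *\<^sub>R v t) \<in> borel_measurable borel"
    and x: "lsol (\<lambda>s z. f z (v s)) x0 T x"
    and t: "t \<in> {0..T}"
  shows "norm (x t) \<le> real CARD('i) * Bm \<alpha> g CARD('i) ((\<Sum>k\<in>UNIV. \<sigma> k (norm x0)) + (\<Sum>k\<in>UNIV. gu k r))"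
proof -
  define W where "W = (\<Sum>k\<in>UNIV. \<sigma> k (norm x0)) + (\<Sum>k\<in>UNIV. gu k r)"
  have r0: "0 \<le> r" using norm_ge_zero[of "v 0"] vb[of 0] by linarith
  have lv: "linf_norm v \<le> r" "0 \<le> linf_norm v" using linf_le[of v r] vb r0 by auto
  have cx: "continuous_on {0..t} x" using x t by (auto simp: lsol_def intro: continuous_on_subset)
  have "\<exists>\<tau>\<in>{0..t}. \<forall>s\<in>{0..t}. norm (blk b j (x s)) \<le> norm (blk b j (x \<tau>))" for j
  proof (rule continuous_attains_sup)
    show "continuous_on {0..t} (\<lambda>s. norm (blk b j (x s)))"
      by (intro continuous_on_norm bounded_linear.continuous_on[OF blk_linear cx])
  qed (use t in auto)
  then obtain tm where tm: "\<And>j. tm j \<in> {0..t}" "\<And>j s. s \<in> {0..t} \<Longrightarrow> norm (blk b j (x s)) \<le> norm (blk b j (x (tm j)))"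
    by metis
  define S where "S = (\<lambda>j. norm (blk b j (x (tm j))))"
  have S0: "0 \<le> S j" for j by (simp add: S_def)
  have mle: "linf_norm (trunc 0 \<tau> (\<lambda>s. blk b j (x s))) \<le> S j"
    "0 \<le> linf_norm (trunc 0 \<tau> (\<lambda>s. blk b j (x s)))" if "\<tau> \<in> {0..t}" for \<tau> j
  proof -
    have "norm (trunc 0 \<tau> (\<lambda>s. blk b j (x s)) s) \<le> S j" if "0 \<le> s" for s
      using tm(2)[of s j] \<open>\<tau> \<in> {0..t}\<close> S0[of j] that by (auto simp: trunc_def S_def)
    then show "linf_norm (trunc 0 \<tau> (\<lambda>s. blk b j (x s))) \<le> S j"
      "0 \<le> linf_norm (trunc 0 \<tau> (\<lambda>s. blk b j (x s)))" using linf_le[OF _ S0[of j]] by blast+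
  qed
  define wv where "wv = (\<lambda>i. if i \<in> IS then \<sigma> i (norm (blk b i x0)) + gu i (linf_norm v)
                           else max (\<sigma> i (norm (blk b i x0))) (gu i (linf_norm v)))"
  have sgi: "SGI IS g S wv"
    unfolding SGI_def
  proof
    fix i
    have tmT: "tm i \<in> {0..T}" using tm(1)[of i] t by auto
    note sb = sub_bound[OF sub_GS vb vm x tmT, of i]
    have gm: "g i j (linf_norm (trunc 0 (tm i) (\<lambda>s. blk b j (x s)))) \<le> g i j (S j)" for j
      using K0_props(4)[OF gains(2)[of i j] mle(2)[OF tm(1)] mle(1)[OF tm(1)]] .
    show "S i \<le> (if i \<in> IS then wv i + Gam IS g S i else max (wv i) (Gam IS g S i))"
    proof (cases "i \<in> IS")
      case True
      have "(\<Sum>j\<in>UNIV. g i j (linf_norm (trunc 0 (tm i) (\<lambda>s. blk b j (x s))))) \<le> (\<Sum>j\<in>UNIV. g i j (S j))"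
        by (rule sum_mono) (rule gm)
      moreover have "S i \<le> \<sigma> i (norm (blk b i x0))
                + (\<Sum>j\<in>UNIV. g i j (linf_norm (trunc 0 (tm i) (\<lambda>s. blk b j (x s)))))
                + gu i (linf_norm v)"
      proof -
        have "S i = norm (blk b i (x (tm i)))" by (simp add: S_def)
        also note sb
        also have "(if i \<in> IS then \<sigma> i (norm (blk b i x0))
                + (\<Sum>j\<in>UNIV. g i j (linf_norm (trunc 0 (tm i) (\<lambda>s. blk b j (x s)))))
                + gu i (linf_norm v) else max (\<sigma> i (norm (blk b i x0)))
                  (max (Max (range (\<lambda>j. g i j (linf_norm (trunc 0 (tm i) (\<lambda>s. blk b j (x s)))))))
                    (gu i (linf_norm v)))) = \<sigma> i (norm (blk b i x0))
                + (\<Sum>j\<in>UNIV. g i j (linf_norm (trunc 0 (tm i) (\<lambda>s. blk b j (x s)))))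
                + gu i (linf_norm v)" by (rule if_P[OF True])
        finally show ?thesis .
      qed
      moreover have "Gam IS g S i = (\<Sum>j\<in>UNIV. g i j (S j))" by (simp only: Gam_def if_P[OF True])
      moreover have "wv i = \<sigma> i (norm (blk b i x0)) + gu i (linf_norm v)" by (simp only: wv_def if_P[OF True])
      ultimately show ?thesis using True by simp
    next
      case False
      have "Max (range (\<lambda>j. g i j (linf_norm (trunc 0 (tm i) (\<lambda>s. blk b j (x s)))))) \<le> Max (range (\<lambda>j. g i j (S j)))"
        by (rule Max_range_mono) (rule gm)
      moreover have "S i \<le> max (\<sigma> i (norm (blk b i x0)))
                  (max (Max (range (\<lambda>j. g i j (linf_norm (trunc 0 (tm i) (\<lambda>s. blk b j (x s)))))))
                    (gu i (linf_norm v)))"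
      proof -
        have "S i = norm (blk b i (x (tm i)))" by (simp add: S_def)
        also note sb
        also have "(if i \<in> IS then \<sigma> i (norm (blk b i x0))
                + (\<Sum>j\<in>UNIV. g i j (linf_norm (trunc 0 (tm i) (\<lambda>s. blk b j (x s)))))
                + gu i (linf_norm v) else max (\<sigma> i (norm (blk b i x0)))
                  (max (Max (range (\<lambda>j. g i j (linf_norm (trunc 0 (tm i) (\<lambda>s. blk b j (x s)))))))
                    (gu i (linf_norm v)))) = max (\<sigma> i (norm (blk b i x0)))
                  (max (Max (range (\<lambda>j. g i j (linf_norm (trunc 0 (tm i) (\<lambda>s. blk b j (x s)))))))
                    (gu i (linf_norm v)))" by (rule if_not_P[OF False])
        finally show ?thesis .
      qed
      moreover have "Gam IS g S i = Max (range (\<lambda>j. g i j (S j)))" by (simp only: Gam_def if_not_P[OF False])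
      moreover have "wv i = max (\<sigma> i (norm (blk b i x0))) (gu i (linf_norm v))" by (simp only: wv_def if_not_P[OF False])
      ultimately show ?thesis using False max_helper by simp
    qed
  qed
  have sig: "0 \<le> \<sigma> i (norm (blk b i x0))" "\<sigma> i (norm (blk b i x0)) \<le> (\<Sum>k\<in>UNIV. \<sigma> k (norm x0))" for i
  proof -
    show "0 \<le> \<sigma> i (norm (blk b i x0))" by (rule K0_props(3)[OF gains(1)]) simp
    have "\<sigma> i (norm (blk b i x0)) \<le> \<sigma> i (norm x0)" by (rule K0_props(4)[OF gains(1)]) (auto simp: norm_blk_le)
    also have "\<dots> \<le> (\<Sum>k\<in>UNIV. \<sigma> k (norm x0))"
      by (rule member_le_sum) (auto intro: K0_props(3)[OF gains(1)])
    finally show "\<sigma> i (norm (blk b i x0)) \<le> (\<Sum>k\<in>UNIV. \<sigma> k (norm x0))" .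
  qed
  have gug: "0 \<le> gu i (linf_norm v)" "gu i (linf_norm v) \<le> (\<Sum>k\<in>UNIV. gu k r)" for i
  proof -
    show "0 \<le> gu i (linf_norm v)" by (rule K0_props(3)[OF gains(3)]) (rule lv(2))
    have "gu i (linf_norm v) \<le> gu i r" by (rule K0_props(4)[OF gains(3) lv(2) lv(1)])
    also have "\<dots> \<le> (\<Sum>k\<in>UNIV. gu k r)"
      by (rule member_le_sum) (auto intro: K0_props(3)[OF gains(3)] r0)
    finally show "gu i (linf_norm v) \<le> (\<Sum>k\<in>UNIV. gu k r)" .
  qed
  have wv0: "0 \<le> wv i" for i using sig[of i] gug[of i] by (auto simp: wv_def)
  have wvW: "wv i \<le> W" for i
  proof -
    have "0 \<le> (\<Sum>k\<in>UNIV. gu k r)" "0 \<le> (\<Sum>k\<in>UNIV. \<sigma> k (norm x0))"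
      using sig[of i] gug[of i] by linarith+
    then show ?thesis using sig[of i] gug[of i] by (auto simp: wv_def W_def)
  qed
  have Sb: "S i \<le> Bm \<alpha> g CARD('i) W" for i
    by (rule small_gain_bound[OF \<alpha> SG gains(2) S0 wv0 wvW sgi])
  have "norm (x t) \<le> (\<Sum>i\<in>(UNIV::'i set). norm (blk b i (x t)))" by (rule norm_le_sum_blk)
  also have "\<dots> \<le> (\<Sum>i\<in>(UNIV::'i set). Bm \<alpha> g CARD('i) W)"
  proof (rule sum_mono)
    fix i :: 'i
    have "norm (blk b i (x t)) \<le> S i" using tm(2)[of t i] t by (simp add: S_def)
    then show "norm (blk b i (x t)) \<le> Bm \<alpha> g CARD('i) W" using Sb[of i] by linarith
  qed
  also have "\<dots> = real CARD('i) * Bm \<alpha> g CARD('i) W" by simp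
  finally show ?thesis by (simp add: W_def)
qed

lemma Phi_props:
  assumes \<alpha>: "class_Kinf \<alpha>" and g: "\<And>i j. class_K0 (g i j)"
  defines "\<Phi> \<equiv> (\<lambda>W. real CARD('i::finite) * Bm \<alpha> (g::'i \<Rightarrow> 'i \<Rightarrow> real \<Rightarrow> real) CARD('i) W)"
  shows "\<And>W. 0 \<le> W \<Longrightarrow> 0 \<le> \<Phi> W" "\<And>a b. 0 \<le> a \<Longrightarrow> a \<le> b \<Longrightarrow> \<Phi> a \<le> \<Phi> b"
    "\<Phi> 0 = 0" "continuous_on {0..} \<Phi>"
proof -
  note BP = Bm_props[of \<alpha> g "CARD('i)", OF \<alpha> g]
  show "\<And>W. 0 \<le> W \<Longrightarrow> 0 \<le> \<Phi> W" using BP unfolding \<Phi>_def by simp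
  show "\<And>a b. 0 \<le> a \<Longrightarrow> a \<le> b \<Longrightarrow> \<Phi> a \<le> \<Phi> b" using BP unfolding \<Phi>_def
    by (simp add: mult_left_mono)
  show "\<Phi> 0 = 0" using BP unfolding \<Phi>_def by simp
  show "continuous_on {0..} \<Phi>" using BP unfolding \<Phi>_def
    by (intro continuous_on_mult[OF continuous_on_const]) auto
qed

lemma K_build:
  fixes \<Phi> :: "real \<Rightarrow> real"
  assumes \<Phi>: "\<And>W. 0 \<le> W \<Longrightarrow> 0 \<le> \<Phi> W" "\<And>a b. 0 \<le> a \<Longrightarrow> a \<le> b \<Longrightarrow> \<Phi> a \<le> \<Phi> b"
    "\<Phi> 0 = 0" "continuous_on {0..} \<Phi>"
    and h: "\<And>k::'i::finite. class_K0 (h k)"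
  shows "class_K (\<lambda>s. \<Phi> (2 * (\<Sum>k\<in>UNIV. h k s)) + s)"
proof -
  have hc: "continuous_on {0..} (h k)" for k by (rule K0_props(2)[OF h[of k]])
  have hn: "0 \<le> h k s" if "0 \<le> s" for k s by (rule K0_props(3)[OF h[of k] that])
  have hm: "h k a \<le> h k b" if "0 \<le> a" "a \<le> b" for k a b by (rule K0_props(4)[OF h[of k] that])
  have hz: "h k 0 = 0" for k by (rule K0_props(1)[OF h[of k]])
  have hs0: "0 \<le> 2 * (\<Sum>k\<in>UNIV. h k s)" if "0 \<le> s" for s
    using hn[OF that] by (simp add: sum_nonneg)
  have hsm: "(\<Sum>k\<in>UNIV. h k a) \<le> (\<Sum>k\<in>UNIV. h k b)" if "0 \<le> a" "a \<le> b" for a b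
    by (rule sum_mono) (rule hm[OF that])
  have c1: "continuous_on {0..} (\<lambda>s. 2 * (\<Sum>k\<in>UNIV. h k s))"
  proof -
    have "continuous_on {0..} (\<lambda>s. (\<Sum>k\<in>UNIV. h k s))"
      by (rule continuous_on_sum) (rule hc)
    then show ?thesis by (rule continuous_on_mult[OF continuous_on_const])
  qed
  have im: "(\<lambda>s. 2 * (\<Sum>k\<in>UNIV. h k s)) ` {0..} \<subseteq> {0..}"
  proof (rule image_subsetI)
    fix s :: real assume "s \<in> {0..}"
    then have "0 \<le> 2 * (\<Sum>k\<in>UNIV. h k s)" using hs0 by simp
    then show "2 * (\<Sum>k\<in>UNIV. h k s) \<in> {0..}" by simp
  qed
  have "continuous_on {0..} (\<lambda>s. \<Phi> (2 * (\<Sum>k\<in>UNIV. h k s)))"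
    using continuous_on_compose2[OF \<Phi>(4) c1 im] .
  then have "continuous_on {0..} (\<lambda>s. \<Phi> (2 * (\<Sum>k\<in>UNIV. h k s)) + s)"
    by (rule continuous_on_add[OF _ continuous_on_id])
  moreover have "strict_mono_on {0..} (\<lambda>s. \<Phi> (2 * (\<Sum>k\<in>UNIV. h k s)) + s)"
  proof (rule strict_mono_onI)
    fix a b :: real assume ab: "a \<in> {0..}" "b \<in> {0..}" "a < b"
    have "\<Phi> (2 * (\<Sum>k\<in>UNIV. h k a)) \<le> \<Phi> (2 * (\<Sum>k\<in>UNIV. h k b))"
      using hs0[of a] hsm[of a b] ab by (intro \<Phi>(2)) auto
    then show "\<Phi> (2 * (\<Sum>k\<in>UNIV. h k a)) + a < \<Phi> (2 * (\<Sum>k\<in>UNIV. h k b)) + b" using ab by simp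
  qed
  moreover have "\<Phi> (2 * (\<Sum>k\<in>UNIV. h k 0)) + 0 = 0" using hz \<Phi>(3) by simp
  ultimately show ?thesis by (simp add: class_K_def)
qed

lemma Phi_split:
  fixes a b :: real and \<Phi> :: "real \<Rightarrow> real"
  assumes \<Phi>: "\<And>W. 0 \<le> W \<Longrightarrow> 0 \<le> \<Phi> W" "\<And>a b. 0 \<le> a \<Longrightarrow> a \<le> b \<Longrightarrow> \<Phi> a \<le> \<Phi> b"
    and ab: "0 \<le> a" "0 \<le> b"
  shows "\<Phi> (a + b) \<le> \<Phi> (2 * a) + \<Phi> (2 * b)"
proof (cases "a \<le> b")
  case True
  then have "\<Phi> (a + b) \<le> \<Phi> (2 * b)" using ab by (intro \<Phi>(2)) auto
  moreover have "0 \<le> \<Phi> (2 * a)" using \<Phi>(1)[of "2*a"] ab by simp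
  ultimately show ?thesis by linarith
next
  case False
  then have "\<Phi> (a + b) \<le> \<Phi> (2 * a)" using ab by (intro \<Phi>(2)) auto
  moreover have "0 \<le> \<Phi> (2 * b)" using \<Phi>(1)[of "2*b"] ab by simp
  ultimately show ?thesis by linarith
qed

lemma flip_full:
  fixes f :: "real^'d \<Rightarrow> real^'m \<Rightarrow> real^'d" and b :: "'d \<Rightarrow> 'i::finite" and ub :: "'m \<Rightarrow> 'i"
  assumes f_lip: "\<And>i r x0. \<exists>\<delta>>0. \<exists>L. \<forall>x\<in>ball x0 \<delta>. \<forall>y\<in>ball x0 \<delta>. \<forall>u.
                  norm (blk ub i u) \<le> r \<longrightarrow>
                  norm (blk b i (f x u) - blk b i (f y u)) \<le> L * norm (x - y)"
  shows "\<exists>\<delta>>0. \<exists>L. \<forall>x\<in>ball x0 \<delta>. \<forall>y\<in>ball x0 \<delta>. \<forall>u. norm u \<le> r \<longrightarrow>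
                  norm (f x u - f y u) \<le> L * norm (x - y)"
proof -
  have "\<forall>i. \<exists>\<delta>. \<delta> > 0 \<and> (\<exists>L. \<forall>x\<in>ball x0 \<delta>. \<forall>y\<in>ball x0 \<delta>. \<forall>u.
                  norm (blk ub i u) \<le> r \<longrightarrow>
                  norm (blk b i (f x u) - blk b i (f y u)) \<le> L * norm (x - y))"
    using f_lip by blast
  then obtain D where D: "\<And>i. D i > 0" "\<And>i. \<exists>L. \<forall>x\<in>ball x0 (D i). \<forall>y\<in>ball x0 (D i). \<forall>u.
                  norm (blk ub i u) \<le> r \<longrightarrow>
                  norm (blk b i (f x u) - blk b i (f y u)) \<le> L * norm (x - y)"
    by metis
  then obtain Lf where Lf: "\<And>i. \<forall>x\<in>ball x0 (D i). \<forall>y\<in>ball x0 (D i). \<forall>u.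
                  norm (blk ub i u) \<le> r \<longrightarrow>
                  norm (blk b i (f x u) - blk b i (f y u)) \<le> Lf i * norm (x - y)"
    by metis
  define \<delta> where "\<delta> = Min (range D)"
  have d0: "\<delta> > 0" unfolding \<delta>_def using D(1) by (subst Min_gr_iff) auto
  have dle: "\<delta> \<le> D i" for i unfolding \<delta>_def by (rule Min_le) auto
  have "norm (f x u - f y u) \<le> (\<Sum>i\<in>UNIV. Lf i) * norm (x - y)"
    if x: "x \<in> ball x0 \<delta>" and y: "y \<in> ball x0 \<delta>" and u: "norm u \<le> r" for x y u
  proof -
    have "norm (f x u - f y u) \<le> (\<Sum>i\<in>(UNIV::'i set). norm (blk b i (f x u - f y u)))"
      by (rule norm_le_sum_blk)
    also have "\<dots> \<le> (\<Sum>i\<in>(UNIV::'i set). Lf i * norm (x - y))"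
    proof (rule sum_mono)
      fix i :: 'i
      have "blk b i (f x u - f y u) = blk b i (f x u) - blk b i (f y u)"
        by (rule linear_diff[OF bounded_linear.linear[OF blk_linear]])
      moreover have "x \<in> ball x0 (D i)" "y \<in> ball x0 (D i)" using x y dle[of i] by auto
      moreover have "norm (blk ub i u) \<le> r" using norm_blk_le[of ub i u] u by linarith
      ultimately show "norm (blk b i (f x u - f y u)) \<le> Lf i * norm (x - y)" using Lf[of i] by auto
    qed
    also have "\<dots> = (\<Sum>i\<in>UNIV. Lf i) * norm (x - y)" by (simp add: sum_distrib_right)
    finally show ?thesis .
  qed
  then show ?thesis using d0 by blast
qed

theorem theorem1:
  fixes f :: "real^'d \<Rightarrow> real^'m \<Rightarrow> real^'d"
    and b :: "'d \<Rightarrow> 'i::finite" and ub :: "'m \<Rightarrow> 'i"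
    and IS :: "'i set"
    and \<sigma> :: "'i \<Rightarrow> real \<Rightarrow> real" and g :: "'i \<Rightarrow> 'i \<Rightarrow> real \<Rightarrow> real"
    and gu :: "'i \<Rightarrow> real \<Rightarrow> real"
  assumes blocks: "surj b" "surj ub"
    and f_cont: "continuous_on UNIV (\<lambda>(x, u). f x u)"
    and f_ui: "\<And>i x u u'. blk ub i u = blk ub i u' \<Longrightarrow> blk b i (f x u) = blk b i (f x u')"
    and f_lip: "\<And>i r x0. \<exists>\<delta>>0. \<exists>L. \<forall>x\<in>ball x0 \<delta>. \<forall>y\<in>ball x0 \<delta>. \<forall>u.
                  norm (blk ub i u) \<le> r \<longrightarrow>
                  norm (blk b i (f x u) - blk b i (f y u)) \<le> L * norm (x - y)"
    and gains: "\<And>i. class_K0 (\<sigma> i)" "\<And>i j. class_K0 (g i j)" "\<And>i. class_K0 (gu i)"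
    and g_diag: "\<And>i s. 0 \<le> s \<Longrightarrow> g i i s = 0"
    and sub_GS: "\<And>i xi w u. blk b i xi = xi \<Longrightarrow> Linf w \<Longrightarrow> Linf u \<Longrightarrow>
        (\<exists>y. is_solution (sub_rhs b f i w u) xi y)
      \<and> (\<forall>y y'. is_solution (sub_rhs b f i w u) xi y \<longrightarrow> is_solution (sub_rhs b f i w u) xi y'
              \<longrightarrow> (\<forall>t\<ge>0. y t = y' t))
      \<and> (\<forall>y. is_solution (sub_rhs b f i w u) xi y \<longrightarrow> (\<forall>t\<ge>0.
            norm (y t) \<le>
             (if i \<in> IS then
                \<sigma> i (norm xi)
                + (\<Sum>j\<in>UNIV. g i j (linf_norm (trunc 0 t
                      (\<lambda>s. blk b j (y s + (w s - blk b i (w s)))))))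
                + gu i (linf_norm u)
              else
                max (\<sigma> i (norm xi))
                  (max (Max (range (\<lambda>j. g i j (linf_norm (trunc 0 t
                      (\<lambda>s. blk b j (y s + (w s - blk b i (w s)))))))))
                    (gu i (linf_norm u))))))"
    and small_gain: "\<exists>\<alpha>. class_Kinf \<alpha> \<and>
        (\<forall>s::real^'i. (\<forall>i. 0 \<le> s $ i) \<and> s \<noteq> 0 \<longrightarrow>
           (\<exists>i. gain_op IS g (D_op IS \<alpha> s) $ i < s $ i))"
  shows "\<exists>\<sigma>0 g0. class_K \<sigma>0 \<and> class_K g0 \<and>
    (\<forall>x0 u. Linf u \<longrightarrow>
        (\<exists>x. is_solution (\<lambda>s z. f z (u s)) x0 x)
      \<and> (\<forall>x x'. is_solution (\<lambda>s z. f z (u s)) x0 x \<longrightarrow> is_solution (\<lambda>s z. f z (u s)) x0 x'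
              \<longrightarrow> (\<forall>t\<ge>0. x t = x' t))
      \<and> (\<forall>x. is_solution (\<lambda>s z. f z (u s)) x0 x \<longrightarrow>
              (\<forall>t\<ge>0. norm (x t) \<le> \<sigma>0 (norm x0) + g0 (linf_norm u))))"
proof -
  obtain \<alpha> where \<alpha>: "class_Kinf \<alpha>" and SG: "\<forall>s::real^'i. (\<forall>i. 0 \<le> s $ i) \<and> s \<noteq> 0 \<longrightarrow>
           (\<exists>i. gain_op IS g (D_op IS \<alpha> s) $ i < s $ i)"
    using small_gain by blast
  have flip: "\<exists>\<delta>>0. \<exists>L. \<forall>x\<in>ball x0 \<delta>. \<forall>y\<in>ball x0 \<delta>. \<forall>u. norm u \<le> r \<longrightarrow>
                  norm (f x u - f y u) \<le> L * norm (x - y)" for x0 r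
    by (rule flip_full[OF f_lip])
  have lipR: "\<exists>L\<ge>0. \<forall>u x y. u \<in> cball 0 r \<longrightarrow> x \<in> cball 0 R \<longrightarrow> y \<in> cball 0 R \<longrightarrow>
            norm (f x u - f y u) \<le> L * norm (x - y)" for r R
    by (rule lip_compact[OF f_cont flip])
  define \<Phi> where "\<Phi> = (\<lambda>W. real CARD('i) * Bm \<alpha> g CARD('i) W)"
  have PP: "\<And>W. 0 \<le> W \<Longrightarrow> 0 \<le> \<Phi> W" "\<And>a b. 0 \<le> a \<Longrightarrow> a \<le> b \<Longrightarrow> \<Phi> a \<le> \<Phi> b"
    "\<Phi> 0 = 0" "continuous_on {0..} \<Phi>"
    unfolding \<Phi>_def using Phi_props[of \<alpha> g, OF \<alpha> gains(2)] by simp_all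
  define \<sigma>0 where "\<sigma>0 = (\<lambda>s. \<Phi> (2 * (\<Sum>k\<in>UNIV. \<sigma> k s)) + s)"
  define g0 where "g0 = (\<lambda>s. \<Phi> (2 * (\<Sum>k\<in>UNIV. gu k s)) + s)"
  have K1: "class_K \<sigma>0" unfolding \<sigma>0_def by (rule K_build[OF PP gains(1)])
  have K2: "class_K g0" unfolding g0_def by (rule K_build[OF PP gains(3)])
  have main: "(\<exists>x. is_solution (\<lambda>s z. f z (u s)) x0 x)
      \<and> (\<forall>x x'. is_solution (\<lambda>s z. f z (u s)) x0 x \<longrightarrow> is_solution (\<lambda>s z. f z (u s)) x0 x'
              \<longrightarrow> (\<forall>t\<ge>0. x t = x' t))
      \<and> (\<forall>x. is_solution (\<lambda>s z. f z (u s)) x0 x \<longrightarrow>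
              (\<forall>t\<ge>0. norm (x t) \<le> \<sigma>0 (norm x0) + g0 (linf_norm u)))"
    if Lu: "Linf u" for x0 u
  proof -
    define r where "r = linf_norm u"
    have uAE: "AE t in lborel. 0 \<le> t \<longrightarrow> norm (u t) \<le> r" and r0: "0 \<le> r"
      using linf_AE[OF Lu] by (auto simp: r_def)
    define v where "v = (\<lambda>s. if norm (u s) \<le> r then u s else 0)"
    have vb: "norm (v t) \<le> r" for t using r0 by (simp add: v_def)
    have um: "(\<lambda>t. indicator {0..} t *\<^sub>R u t) \<in> borel_measurable borel" using Lu by (simp add: Linf_def)
    have vm: "(\<lambda>t. indicator {0..} t *\<^sub>R v t) \<in> borel_measurable borel"
    proof -
      define U where "U = (\<lambda>t. indicator {0..} t *\<^sub>R u t)"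
      have [measurable]: "U \<in> borel_measurable borel" using um by (simp add: U_def)
      have "(\<lambda>t. if norm (U t) \<le> r then U t else 0) \<in> borel_measurable borel" by measurable
      moreover have "(\<lambda>t. indicator {0..} t *\<^sub>R v t) = (\<lambda>t. if norm (U t) \<le> r then U t else 0)"
        using r0 by (auto simp: U_def v_def indicator_def fun_eq_iff)
      ultimately show ?thesis by simp
    qed
    obtain N where N: "{t \<in> space lborel. \<not> (0 \<le> t \<longrightarrow> norm (u t) \<le> r)} \<subseteq> N"
      "emeasure lborel N = 0" "N \<in> sets lborel"
      using uAE by (rule AE_E)
    have negN: "negligible N"
    proof -
      have "N \<in> null_sets lborel" using N(2,3) by auto
      then have "N \<in> null_sets lebesgue" by (rule null_sets_completionI)
      then show ?thesis by (simp add: negligible_iff_null_sets)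
    qed
    have uv: "u s = v s" if "s \<in> {0..t} - N" for s t
      using that N(1) by (auto simp: v_def)
    have eqv: "is_solution (\<lambda>s z. f z (u s)) x0 x \<longleftrightarrow> is_solution (\<lambda>s z. f z (v s)) x0 x" for x
    proof -
      have "((\<lambda>s. f (x s) (u s)) has_integral (x t - x0)) {0..t} \<longleftrightarrow>
            ((\<lambda>s. f (x s) (v s)) has_integral (x t - x0)) {0..t}" for t
        by (rule has_integral_spike_eq[OF negN]) (use uv in auto)
      then show ?thesis unfolding is_solution_def by auto
    qed
    define W where "W = (\<Sum>k\<in>UNIV. \<sigma> k (norm x0)) + (\<Sum>k\<in>UNIV. gu k r)"
    have apr: "norm (x t) \<le> \<Phi> W" if "lsol (\<lambda>s z. f z (v s)) x0 T x" "t \<in> {0..T}" for T x t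
      unfolding \<Phi>_def W_def by (rule apriori[OF sub_GS gains \<alpha> SG vb vm that])
    have W: "\<Phi> W \<le> \<sigma>0 (norm x0) + g0 (linf_norm u)"
    proof -
      have a: "0 \<le> (\<Sum>k\<in>UNIV. \<sigma> k (norm x0))" by (rule sum_nonneg) (rule K0_props(3)[OF gains(1)], simp)
      have b: "0 \<le> (\<Sum>k\<in>UNIV. gu k r)" by (rule sum_nonneg) (rule K0_props(3)[OF gains(3) r0])
      have "\<Phi> W \<le> \<Phi> (2 * (\<Sum>k\<in>UNIV. \<sigma> k (norm x0))) + \<Phi> (2 * (\<Sum>k\<in>UNIV. gu k r))"
        unfolding W_def by (rule Phi_split[OF PP(1,2) a b])
      moreover have "0 \<le> norm x0" by simp
      ultimately show ?thesis using r0 unfolding \<sigma>0_def g0_def r_def by linarith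
    qed
    have ex: "\<exists>x. is_solution (\<lambda>s z. f z (v s)) x0 x"
    proof (rule global_exist[where f=f and r=r and v=v and xi=x0 and C="\<Phi> W"])
      show "continuous_on UNIV (\<lambda>(x, u). f x u)" by (rule f_cont)
      show "\<exists>L\<ge>0. \<forall>u x y. u \<in> cball 0 r \<longrightarrow> x \<in> cball 0 R \<longrightarrow> y \<in> cball 0 R \<longrightarrow>
            norm (f x u - f y u) \<le> L * norm (x - y)" for R by (rule lipR)
      show "norm (v t) \<le> r" for t by (rule vb)
      show "(\<lambda>t. indicator {0..} t *\<^sub>R v t) \<in> borel_measurable borel" by (rule vm)
      show "norm (x t) \<le> \<Phi> W" if "lsol (\<lambda>s z. f z (v s)) x0 T x" "t \<in> {0..T}" for T x t
        by (rule apr[OF that])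
    qed
    show ?thesis
    proof (intro conjI allI impI)
      show "\<exists>x. is_solution (\<lambda>s z. f z (u s)) x0 x" using ex eqv by blast
    next
      fix x x' :: "real \<Rightarrow> real^'d" and t :: real
      assume x: "is_solution (\<lambda>s z. f z (u s)) x0 x" and x': "is_solution (\<lambda>s z. f z (u s)) x0 x'"
        and t: "0 \<le> t"
      have l1: "lsol (\<lambda>s z. f z (v s)) x0 t x" using sol_lsol x eqv by blast
      have l2: "lsol (\<lambda>s z. f z (v s)) x0 t x'" using sol_lsol x' eqv by blast
      show "x t = x' t" using lsol_unique[OF lipR[of r] vb l1 l2] t by auto
    next
      fix x :: "real \<Rightarrow> real^'d" and t :: real
      assume x: "is_solution (\<lambda>s z. f z (u s)) x0 x" and t: "0 \<le> t"
      have l: "lsol (\<lambda>s z. f z (v s)) x0 t x" using sol_lsol x eqv by blast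
      have "norm (x t) \<le> \<Phi> W" by (rule apr[OF l]) (use t in simp)
      then show "norm (x t) \<le> \<sigma>0 (norm x0) + g0 (linf_norm u)" using W by linarith
    qed
  qed
  show ?thesis using K1 K2 main by blast
qed

end
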